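(* Define rooted trees $H(k)$, $k\ge 0$, recursively: $H(0)$ is a single vertex $u_0$ (its root); for $k\ge 0$, $H(k+1)$ consists of a root $u_{k+1}$ with three children $v_1,v_2,v_3$, where each $v_i$ has exactly three children, each of which is the root of a copy of $H(k)$ (all nine copies being disjoint). Then for every $k\ge 0$, $\mathrm{lmw}(H(k))=k$ and $\mathrm{lmw}(H(k)^2)=\mathrm{lmw}(H(k)^2-u_k)=2k$, where $H(k)^2-u_k$ denotes the graph obtained from $H(k)^2$ by deleting the root $u_k$.
   Context: All graphs are finite and simple. For a graph $G$, its square $G^2$ is the graph on $V(G)$ in which two distinct vertices are adjacent iff their distance in $G$ is at most $2$. For disjoint $S,T\subseteq V(G)$, $G[S,T]$ denotes the bipartite graph on $S\cup T$ whose edges are exactly the edges of $G$ with one endpoint in $S$ and the other in $T$. $\mathrm{mim}(H)$ is the maximum number of edges in an induced matching of $H$. A linear layout of an $n$-vertex graph $G$ is a bijection $\sigma:V(G)\to\{1,\dots,n\}$; write $v_i=\sigma^{-1}(i)$ and $V_i^\sigma=\{v_1,\dots,v_i\}$, $\overline{V_i^\sigma}=V(G)\setminus V_i^\sigma$. The MIM-width of $G$ under $\sigma$ is $\mathrm{mw}(\sigma,G)=\max_{1\le i<n}\mathrm{mim}(G[V_i^\sigma,\overline{V_i^\sigma}])$ (equal to $0$ if $n\le 1$, including the empty graph). The linear MIM-width $\mathrm{lmw}(G)$ is the minimum of $\mathrm{mw}(\sigma,G)$ over all linear layouts $\sigma$ of $G$ (and is $0$ for the empty graph). *)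

theory Defs
  imports Main
begin

type_synonym 'a graph = "'a set \<times> 'a set set"

definition verts :: "'a graph \<Rightarrow> 'a set" where "verts G = fst G"
definition edges :: "'a graph \<Rightarrow> 'a set set" where "edges G = snd G"

definition graph_square :: "'a graph \<Rightarrow> 'a graph" where
  "graph_square G = (verts G,
     {{x, y} | x y. x \<in> verts G \<and> y \<in> verts G \<and> x \<noteq> y \<and>
        ({x, y} \<in> edges G \<or> (\<exists>z. {x, z} \<in> edges G \<and> {z, y} \<in> edges G))})"

definition delete_vertex :: "'a graph \<Rightarrow> 'a \<Rightarrow> 'a graph" where
  "delete_vertex G v = (verts G - {v}, {e \<in> edges G. v \<notin> e})"

definition bip :: "'a graph \<Rightarrow> 'a set \<Rightarrow> 'a set \<Rightarrow> 'a graph" where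
  "bip G S T = (S \<union> T, {e \<in> edges G. \<exists>s\<in>S. \<exists>t\<in>T. e = {s, t}})"

definition induced_matching :: "'a graph \<Rightarrow> 'a set set \<Rightarrow> bool" where
  "induced_matching H M \<longleftrightarrow> M \<subseteq> edges H \<and>
     (\<forall>e\<in>M. \<forall>f\<in>M. e \<noteq> f \<longrightarrow>
        e \<inter> f = {} \<and> \<not> (\<exists>g\<in>edges H. g \<inter> e \<noteq> {} \<and> g \<inter> f \<noteq> {}))"

definition mim :: "'a graph \<Rightarrow> nat" where
  "mim H = Max {card M | M. induced_matching H M}"

definition mw :: "('a \<Rightarrow> nat) \<Rightarrow> 'a graph \<Rightarrow> nat" where
  "mw \<sigma> G = Max ({0} \<union>
     {mim (bip G {v \<in> verts G. \<sigma> v \<le> i} {v \<in> verts G. \<not> \<sigma> v \<le> i}) | i.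
        1 \<le> i \<and> i < card (verts G)})"

definition linear_layout :: "('a \<Rightarrow> nat) \<Rightarrow> 'a graph \<Rightarrow> bool" where
  "linear_layout \<sigma> G \<longleftrightarrow> bij_betw \<sigma> (verts G) {1..card (verts G)}"

definition lmw :: "'a graph \<Rightarrow> nat" where
  "lmw G = (LEAST w. \<exists>\<sigma>. linear_layout \<sigma> G \<and> mw \<sigma> G = w)"

text \<open>Vertices are lists of naturals; the root is [];
  the children of the root are [i] (i<3), their children are [i,j] (j<3), and
  [i,j] is the root of a copy of H(k) with vertices [i,j] @ w.\<close>
fun Hverts :: "nat \<Rightarrow> nat list set" where
  "Hverts 0 = {[]}"
| "Hverts (Suc k) = {[]} \<union> {[i] | i. i < 3} \<union> {[i, j] | i j. i < 3 \<and> j < 3}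
     \<union> {[i, j] @ w | i j w. i < 3 \<and> j < 3 \<and> w \<in> Hverts k}"

fun Hedges :: "nat \<Rightarrow> nat list set set" where
  "Hedges 0 = {}"
| "Hedges (Suc k) = {{[], [i]} | i. i < 3} \<union> {{[i], [i, j]} | i j. i < 3 \<and> j < 3}
     \<union> {{[i, j] @ a, [i, j] @ b} | i j a b. i < 3 \<and> j < 3 \<and> {a, b} \<in> Hedges k}"

definition Htree :: "nat \<Rightarrow> nat list graph" where
  "Htree k = (Hverts k, Hedges k)"

definition Hroot :: "nat list" where "Hroot = []"

end

theory Submission
  imports Defs
begin

definition mkG :: "'a set \<Rightarrow> ('a \<Rightarrow> 'a \<Rightarrow> bool) \<Rightarrow> 'a graph" where
  "mkG V A = (V, {{x, y} | x y. x \<in> V \<and> y \<in> V \<and> x \<noteq> y \<and> A x y})"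

definition Lc :: "('a \<Rightarrow> nat) \<Rightarrow> 'a set \<Rightarrow> nat \<Rightarrow> 'a set" where
  "Lc \<tau> V t = {v \<in> V. \<tau> v \<le> t}"
definition Rc :: "('a \<Rightarrow> nat) \<Rightarrow> 'a set \<Rightarrow> nat \<Rightarrow> 'a set" where
  "Rc \<tau> V t = {v \<in> V. \<not> \<tau> v \<le> t}"

definition symr :: "('a \<Rightarrow> 'a \<Rightarrow> bool) \<Rightarrow> bool" where
  "symr A \<longleftrightarrow> (\<forall>x y. A x y = A y x)"

abbreviation IM where
  "IM V A S T M \<equiv> induced_matching (bip (mkG V A) S T) M"

lemma verts_mkG[simp]: "verts (mkG V A) = V"
  by (simp add: mkG_def verts_def)

lemma edges_mkG: "edges (mkG V A) = {{x, y} | x y. x \<in> V \<and> y \<in> V \<and> x \<noteq> y \<and> A x y}"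
  by (simp add: mkG_def edges_def)

lemma in_edges_mkG:
  assumes "symr A"
  shows "{x, y} \<in> edges (mkG V A) \<longleftrightarrow> x \<in> V \<and> y \<in> V \<and> x \<noteq> y \<and> A x y"
  using assms unfolding edges_mkG symr_def by (auto simp: doubleton_eq_iff)

lemma edges_bip: "edges (bip G S T) = {e \<in> edges G. \<exists>s\<in>S. \<exists>t\<in>T. e = {s, t}}"
  by (simp add: bip_def edges_def)

lemma verts_bip: "verts (bip G S T) = S \<union> T"
  by (simp add: bip_def verts_def)

lemma cut_edge:
  assumes "symr A" "S \<inter> T = {}" "S \<subseteq> V" "T \<subseteq> V"
  shows "e \<in> edges (bip (mkG V A) S T) \<longleftrightarrow> (\<exists>s t. s \<in> S \<and> t \<in> T \<and> A s t \<and> e = {s, t})"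
proof
  assume "e \<in> edges (bip (mkG V A) S T)"
  then obtain s t where st: "s \<in> S" "t \<in> T" "e = {s,t}" "e \<in> edges (mkG V A)"
    unfolding edges_bip by auto
  then have "A s t" using in_edges_mkG[OF assms(1)] by auto
  then show "\<exists>s t. s \<in> S \<and> t \<in> T \<and> A s t \<and> e = {s, t}" using st by auto
next
  assume "\<exists>s t. s \<in> S \<and> t \<in> T \<and> A s t \<and> e = {s, t}"
  then obtain s t where st: "s \<in> S" "t \<in> T" "A s t" "e = {s,t}" by auto
  have "s \<noteq> t" using st assms(2) by auto
  then have "e \<in> edges (mkG V A)" using st assms(3,4) in_edges_mkG[OF assms(1)] by auto
  then show "e \<in> edges (bip (mkG V A) S T)" unfolding edges_bip using st by auto
qed

lemma IM_pair:
  assumes "symr A" "S \<inter> T = {}" "S \<subseteq> V" "T \<subseteq> V"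
    and "IM V A S T M" "{s1, t1} \<in> M" "{s2, t2} \<in> M" "{s1, t1} \<noteq> {s2, t2}"
    and "s1 \<in> S" "s2 \<in> S" "t1 \<in> T" "t2 \<in> T"
  shows "s1 \<noteq> s2 \<and> t1 \<noteq> t2 \<and> \<not> A s1 t2 \<and> \<not> A s2 t1"
proof -
  have im: "\<forall>e\<in>M. \<forall>f\<in>M. e \<noteq> f \<longrightarrow>
        e \<inter> f = {} \<and> \<not> (\<exists>g\<in>edges (bip (mkG V A) S T). g \<inter> e \<noteq> {} \<and> g \<inter> f \<noteq> {})"
    using assms(5) unfolding induced_matching_def by (rule conjunct2)
  have X: "{s1,t1} \<inter> {s2,t2} = {} \<and> \<not> (\<exists>g\<in>edges (bip (mkG V A) S T). g \<inter> {s1,t1} \<noteq> {} \<and> g \<inter> {s2,t2} \<noteq> {})"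
    using im[rule_format, OF assms(6,7,8)] .
  have dis: "{s1,t1} \<inter> {s2,t2} = {}" using X by (rule conjunct1)
  have nb: "\<And>g. g \<in> edges (bip (mkG V A) S T) \<Longrightarrow> g \<inter> {s1,t1} \<noteq> {} \<Longrightarrow> g \<inter> {s2,t2} = {}"
    using X by blast
  have 1: "s1 \<noteq> s2 \<and> t1 \<noteq> t2" using dis by auto
  have 2: "\<not> A s1 t2"
  proof
    assume "A s1 t2"
    then have "{s1,t2} \<in> edges (bip (mkG V A) S T)"
      using cut_edge[OF assms(1-4), of "{s1,t2}"] assms(9,12) by blast
    from nb[OF this] show False by simp
  qed
  have 3: "\<not> A s2 t1"
  proof
    assume "A s2 t1"
    then have "{s2,t1} \<in> edges (bip (mkG V A) S T)"
      using cut_edge[OF assms(1-4), of "{s2,t1}"] assms(10,11) by blast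
    from nb[OF this] show False by simp
  qed
  show ?thesis using 1 2 3 by blast
qed

lemma IM_intro:
  assumes "symr A" "S \<inter> T = {}" "S \<subseteq> V" "T \<subseteq> V"
    and edg: "\<And>e. e \<in> M \<Longrightarrow> \<exists>s t. s \<in> S \<and> t \<in> T \<and> A s t \<and> e = {s, t}"
    and pr: "\<And>s1 t1 s2 t2. {s1, t1} \<in> M \<Longrightarrow> {s2, t2} \<in> M \<Longrightarrow> {s1, t1} \<noteq> {s2, t2} \<Longrightarrow>
       s1 \<in> S \<Longrightarrow> s2 \<in> S \<Longrightarrow> t1 \<in> T \<Longrightarrow> t2 \<in> T \<Longrightarrow>
       s1 \<noteq> s2 \<and> t1 \<noteq> t2 \<and> \<not> A s1 t2 \<and> \<not> A s2 t1"
  shows "IM V A S T M"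
  unfolding induced_matching_def
proof (intro conjI ballI impI)
  show "M \<subseteq> edges (bip (mkG V A) S T)" using edg cut_edge[OF assms(1-4)] by blast
next
  fix e f assume ef: "e \<in> M" "f \<in> M" "e \<noteq> f"
  obtain s1 t1 where e: "s1 \<in> S" "t1 \<in> T" "A s1 t1" "e = {s1,t1}" using edg[OF ef(1)] by blast
  obtain s2 t2 where f: "s2 \<in> S" "t2 \<in> T" "A s2 t2" "f = {s2,t2}" using edg[OF ef(2)] by blast
  have P: "s1 \<noteq> s2 \<and> t1 \<noteq> t2 \<and> \<not> A s1 t2 \<and> \<not> A s2 t1"
    using pr[of s1 t1 s2 t2] ef e f by auto
  have d1: "s1 \<noteq> t2" "s2 \<noteq> t1" using e f assms(2) by auto
  show "e \<inter> f = {}" using P d1 e f by auto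
  show "\<not> (\<exists>g\<in>edges (bip (mkG V A) S T). g \<inter> e \<noteq> {} \<and> g \<inter> f \<noteq> {})"
  proof
    assume "\<exists>g\<in>edges (bip (mkG V A) S T). g \<inter> e \<noteq> {} \<and> g \<inter> f \<noteq> {}"
    then obtain g where g: "g \<in> edges (bip (mkG V A) S T)" "g \<inter> e \<noteq> {}" "g \<inter> f \<noteq> {}" by blast
    obtain s t where st: "s \<in> S" "t \<in> T" "A s t" "g = {s,t}" using g(1) cut_edge[OF assms(1-4)] by blast
    have sym: "\<And>x y. A x y = A y x" using assms(1) unfolding symr_def by blast
    have "s \<noteq> t1" "s \<noteq> t2" "t \<noteq> s1" "t \<noteq> s2" using st e f assms(2) by auto
    then have "(s = s1 \<or> t = t1) \<and> (s = s2 \<or> t = t2)" using g(2,3) st e f by auto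
    then show False using P st by auto
  qed
qed

lemma pair_norm:
  assumes "{s1, t1} = {s, t}" "s1 \<in> S" "s \<in> S" "t1 \<in> T" "t \<in> T" "S \<inter> T = {}"
  shows "s1 = s \<and> t1 = t"
proof -
  have "s1 \<noteq> t" "t1 \<noteq> s" using assms by blast+
  then show ?thesis using assms(1) by (auto simp: doubleton_eq_iff)
qed

lemma finite_edges_bip:
  assumes "finite V"
  shows "finite (edges (bip (mkG V A) S T))"
proof -
  have "edges (bip (mkG V A) S T) \<subseteq> Pow V"
    unfolding edges_bip edges_mkG by (auto simp: doubleton_eq_iff)
  then show ?thesis using assms finite_subset by blast
qed

lemma IM_sub_edges: "induced_matching H M \<Longrightarrow> M \<subseteq> edges H"
  unfolding induced_matching_def by blast

lemma IM_finite: "finite V \<Longrightarrow> IM V A S T M \<Longrightarrow> finite M"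
  by (rule finite_subset[OF IM_sub_edges finite_edges_bip])

lemma mim_ge:
  assumes "finite V" "IM V A S T M"
  shows "card M \<le> mim (bip (mkG V A) S T)"
proof -
  let ?H = "bip (mkG V A) S T"
  have "{card M | M. induced_matching ?H M} \<subseteq> card ` Pow (edges ?H)"
  proof (rule subsetI)
    fix x assume "x \<in> {card M | M. induced_matching ?H M}"
    then obtain N where N: "x = card N" "induced_matching ?H N" by blast
    have "N \<in> Pow (edges ?H)" using IM_sub_edges[OF N(2)] by simp
    then show "x \<in> card ` Pow (edges ?H)" using N(1) by (rule rev_image_eqI)
  qed
  then have "finite {card M | M. induced_matching ?H M}"
    using finite_edges_bip[OF assms(1)] by (meson finite_Pow_iff finite_imageI finite_subset)
  moreover have "card M \<in> {card M | M. induced_matching ?H M}" using assms(2) by blast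
  ultimately show ?thesis unfolding mim_def by (rule Max_ge)
qed

lemma mim_le:
  assumes "finite V" "\<And>M. IM V A S T M \<Longrightarrow> card M \<le> w"
  shows "mim (bip (mkG V A) S T) \<le> w"
proof -
  let ?H = "bip (mkG V A) S T"
  have "{card M | M. induced_matching ?H M} \<subseteq> card ` Pow (edges ?H)"
  proof (rule subsetI)
    fix x assume "x \<in> {card M | M. induced_matching ?H M}"
    then obtain N where N: "x = card N" "induced_matching ?H N" by blast
    have "N \<in> Pow (edges ?H)" using IM_sub_edges[OF N(2)] by simp
    then show "x \<in> card ` Pow (edges ?H)" using N(1) by (rule rev_image_eqI)
  qed
  then have f: "finite {card M | M. induced_matching ?H M}"
    using finite_edges_bip[OF assms(1)] by (meson finite_Pow_iff finite_imageI finite_subset)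
  have "induced_matching ?H {}" unfolding induced_matching_def by simp
  then have ne: "{card M | M. induced_matching ?H M} \<noteq> {}" by blast
  have "\<forall>x\<in>{card M | M. induced_matching ?H M}. x \<le> w" using assms(2) by blast
  then show ?thesis unfolding mim_def using f ne by (simp add: Max_le_iff)
qed

lemma IM_subset:
  assumes "induced_matching H M" "M' \<subseteq> M"
  shows "induced_matching H M'"
proof -
  have 1: "M \<subseteq> edges H" and 2: "\<forall>e\<in>M. \<forall>f\<in>M. e \<noteq> f \<longrightarrow>
        e \<inter> f = {} \<and> \<not> (\<exists>g\<in>edges H. g \<inter> e \<noteq> {} \<and> g \<inter> f \<noteq> {})"
    using assms(1) unfolding induced_matching_def by (rule conjunct1, rule conjunct2)
  show ?thesis unfolding induced_matching_def
  proof (intro conjI ballI impI)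
    show "M' \<subseteq> edges H" using 1 assms(2) by (rule subset_trans[rotated])
  next
    fix e f assume "e \<in> M'" "f \<in> M'" "e \<noteq> f"
    then have "e \<in> M" "f \<in> M" "e \<noteq> f" using assms(2) by auto
    from 2[rule_format, OF this]
    show "e \<inter> f = {}" "\<not> (\<exists>g\<in>edges H. g \<inter> e \<noteq> {} \<and> g \<inter> f \<noteq> {})" by (rule conjunct1, rule conjunct2)
  qed
qed

lemma IM_cutE:
  assumes "symr A" "S \<inter> T = {}" "S \<subseteq> V" "T \<subseteq> V" "IM V A S T M" "e \<in> M"
  obtains s t where "s \<in> S" "t \<in> T" "A s t" "e = {s, t}"
proof -
  have "e \<in> edges (bip (mkG V A) S T)" using IM_sub_edges[OF assms(5)] assms(6) by (rule subsetD)
  then have "\<exists>s t. s \<in> S \<and> t \<in> T \<and> A s t \<and> e = {s, t}" by (subst cut_edge[OF assms(1-4), symmetric])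
  then obtain s t where "s \<in> S" "t \<in> T" "A s t" "e = {s, t}" by (elim exE conjE)
  then show ?thesis by (rule that)
qed

lemma IM_push:
  assumes "symr A" "S \<inter> T = {}" "S \<subseteq> V" "T \<subseteq> V"
    and "symr A'" "S' \<inter> T' = {}" "S' \<subseteq> V'" "T' \<subseteq> V'"
    and inj: "inj_on f V'" and adj: "\<And>x y. x \<in> V' \<Longrightarrow> y \<in> V' \<Longrightarrow> A' x y \<longleftrightarrow> A (f x) (f y)"
    and fS: "f ` S' \<subseteq> S" and fT: "f ` T' \<subseteq> T"
    and im: "IM V' A' S' T' M'"
  shows "IM V A S T ((`) f ` M') \<and> card ((`) f ` M') = card M'"
proof
  have pre: "\<And>e. e \<in> (`) f ` M' \<Longrightarrow> \<exists>a b. a \<in> S' \<and> b \<in> T' \<and> A' a b \<and> {a,b} \<in> M' \<and> e = {f a, f b}"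
  proof -
    fix e assume "e \<in> (`) f ` M'"
    then obtain e' where e': "e' \<in> M'" "e = f ` e'" by blast
    obtain a b where ab: "a \<in> S'" "b \<in> T'" "A' a b" "e' = {a,b}" using IM_cutE[OF assms(5-8) im e'(1)] by blast
    show "\<exists>a b. a \<in> S' \<and> b \<in> T' \<and> A' a b \<and> {a,b} \<in> M' \<and> e = {f a, f b}"
      using ab e' by auto
  qed
  show "IM V A S T ((`) f ` M')"
  proof (rule IM_intro[OF assms(1-4)])
    fix e assume "e \<in> (`) f ` M'"
    then obtain a b where ab: "a \<in> S'" "b \<in> T'" "A' a b" "e = {f a, f b}" using pre by blast
    then show "\<exists>s t. s \<in> S \<and> t \<in> T \<and> A s t \<and> e = {s, t}"
      using adj[of a b] fS fT assms(7,8) by blast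
  next
    fix s1 t1 s2 t2
    assume h: "{s1, t1} \<in> (`) f ` M'" "{s2, t2} \<in> (`) f ` M'" "{s1, t1} \<noteq> {s2, t2}"
      "s1 \<in> S" "s2 \<in> S" "t1 \<in> T" "t2 \<in> T"
    obtain a1 b1 where 1: "a1 \<in> S'" "b1 \<in> T'" "{a1,b1} \<in> M'" "{s1,t1} = {f a1, f b1}" using pre[OF h(1)] by blast
    obtain a2 b2 where 2: "a2 \<in> S'" "b2 \<in> T'" "{a2,b2} \<in> M'" "{s2,t2} = {f a2, f b2}" using pre[OF h(2)] by blast
    have n1: "s1 = f a1 \<and> t1 = f b1" using pair_norm[OF 1(4) h(4) _ h(6) _ assms(2)] 1 fS fT by blast
    have n2: "s2 = f a2 \<and> t2 = f b2" using pair_norm[OF 2(4) h(5) _ h(7) _ assms(2)] 2 fS fT by blast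
    have ne: "{a1,b1} \<noteq> {a2,b2}" using h(3) 1(4) 2(4) by auto
    have P: "a1 \<noteq> a2 \<and> b1 \<noteq> b2 \<and> \<not> A' a1 b2 \<and> \<not> A' a2 b1"
      using IM_pair[OF assms(5-8) im 1(3) 2(3) ne 1(1) 2(1) 1(2) 2(2)] .
    have V: "a1 \<in> V'" "a2 \<in> V'" "b1 \<in> V'" "b2 \<in> V'" using 1 2 assms(7,8) by blast+
    have "f a1 \<noteq> f a2" "f b1 \<noteq> f b2" using P V inj unfolding inj_on_def by blast+
    moreover have "\<not> A (f a1) (f b2)" "\<not> A (f a2) (f b1)" using P V adj by blast+
    ultimately show "s1 \<noteq> s2 \<and> t1 \<noteq> t2 \<and> \<not> A s1 t2 \<and> \<not> A s2 t1" using n1 n2 by simp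
  qed
  have "\<Union>M' \<subseteq> V'"
  proof
    fix x assume "x \<in> \<Union>M'"
    then obtain e where e: "e \<in> M'" "x \<in> e" by blast
    obtain a b where "a \<in> S'" "b \<in> T'" "e = {a,b}" using IM_cutE[OF assms(5-8) im e(1)] by blast
    then show "x \<in> V'" using e(2) assms(7,8) by blast
  qed
  then have "inj_on ((`) f) M'" using inj inj_on_image inj_on_subset by metis
  then show "card ((`) f ` M') = card M'" by (rule card_image)
qed

lemma IM_pull:
  assumes "symr A" "S \<inter> T = {}" "S \<subseteq> V" "T \<subseteq> V"
    and "symr A'" "S' \<inter> T' = {}" "S' \<subseteq> V'" "T' \<subseteq> V'"
    and inj: "inj_on f V'" and adj: "\<And>x y. x \<in> V' \<Longrightarrow> y \<in> V' \<Longrightarrow> A' x y \<longleftrightarrow> A (f x) (f y)"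
    and fS: "f ` S' \<subseteq> S" and fT: "f ` T' \<subseteq> T"
    and bS: "\<And>x. x \<in> V' \<Longrightarrow> f x \<in> S \<Longrightarrow> x \<in> S'"
    and bT: "\<And>x. x \<in> V' \<Longrightarrow> f x \<in> T \<Longrightarrow> x \<in> T'"
    and im: "IM V A S T M" and sub: "\<And>e. e \<in> M \<Longrightarrow> e \<subseteq> f ` V'"
  shows "\<exists>M'. IM V' A' S' T' M' \<and> card M' = card M"
proof -
  define M' where "M' = {e'. e' \<subseteq> V' \<and> f ` e' \<in> M}"
  have pre: "\<And>e'. e' \<in> M' \<Longrightarrow> \<exists>a b. a \<in> S' \<and> b \<in> T' \<and> A' a b \<and> e' = {a, b}"
  proof -
    fix e' assume "e' \<in> M'"
    then have e': "e' \<subseteq> V'" "f ` e' \<in> M" unfolding M'_def by auto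
    obtain s t where st: "s \<in> S" "t \<in> T" "A s t" "f ` e' = {s,t}" using IM_cutE[OF assms(1-4) im e'(2)] by blast
    have "s \<in> f ` V'" "t \<in> f ` V'" using sub[OF e'(2)] st(4) by auto
    then obtain a b where ab: "a \<in> V'" "b \<in> V'" "s = f a" "t = f b" by blast
    have "f ` e' = f ` {a,b}" using st(4) ab by simp
    then have "e' = {a,b}" using inj_on_image_eq_iff[OF inj e'(1), of "{a,b}"] ab(1,2) by simp
    moreover have "a \<in> S'" "b \<in> T'" using bS bT ab st by auto
    moreover have "A' a b" using adj[OF ab(1,2)] st ab by simp
    ultimately show "\<exists>a b. a \<in> S' \<and> b \<in> T' \<and> A' a b \<and> e' = {a, b}" by blast
  qed
  have imgM: "(`) f ` M' = M"
  proof
    show "(`) f ` M' \<subseteq> M" unfolding M'_def by auto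
  next
    show "M \<subseteq> (`) f ` M'"
    proof
      fix e assume e: "e \<in> M"
      define e' where "e' = {x \<in> V'. f x \<in> e}"
      have "f ` e' = e" using sub[OF e] unfolding e'_def by auto
      moreover have "e' \<subseteq> V'" unfolding e'_def by auto
      ultimately have "e' \<in> M'" unfolding M'_def using e by auto
      then show "e \<in> (`) f ` M'" using \<open>f ` e' = e\<close> by blast
    qed
  qed
  have "\<Union>M' \<subseteq> V'" unfolding M'_def by auto
  then have injM: "inj_on ((`) f) M'" using inj inj_on_image inj_on_subset by metis
  have IM': "IM V' A' S' T' M'"
  proof (rule IM_intro[OF assms(5-8)])
    fix e assume "e \<in> M'" then show "\<exists>s t. s \<in> S' \<and> t \<in> T' \<and> A' s t \<and> e = {s, t}" by (rule pre)
  next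
    fix s1 t1 s2 t2
    assume h: "{s1, t1} \<in> M'" "{s2, t2} \<in> M'" "{s1, t1} \<noteq> {s2, t2}"
      "s1 \<in> S'" "s2 \<in> S'" "t1 \<in> T'" "t2 \<in> T'"
    have i1: "{f s1, f t1} \<in> M" "{f s2, f t2} \<in> M" using h(1,2) unfolding M'_def by auto
    have ne: "{f s1, f t1} \<noteq> {f s2, f t2}"
    proof
      assume "{f s1, f t1} = {f s2, f t2}"
      then have "f ` {s1,t1} = f ` {s2,t2}" by simp
      then show False using injM h(1,2,3) unfolding inj_on_def by blast
    qed
    have P: "f s1 \<noteq> f s2 \<and> f t1 \<noteq> f t2 \<and> \<not> A (f s1) (f t2) \<and> \<not> A (f s2) (f t1)"
      using IM_pair[OF assms(1-4) im i1 ne] h(4-7) fS fT by blast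
    have V: "s1 \<in> V'" "s2 \<in> V'" "t1 \<in> V'" "t2 \<in> V'" using h assms(7,8) by blast+
    show "s1 \<noteq> s2 \<and> t1 \<noteq> t2 \<and> \<not> A' s1 t2 \<and> \<not> A' s2 t1" using P adj V by metis
  qed
  have "card M' = card M" using card_image[OF injM] imgM by simp
  then show ?thesis using IM' by blast
qed

lemma IM_class:
  assumes "symr A" "S \<inter> T = {}" "S \<subseteq> V" "T \<subseteq> V" "IM V A S T M"
    and cls: "\<And>s1 t1 s2 t2. s1 \<in> S \<Longrightarrow> s2 \<in> S \<Longrightarrow> t1 \<in> T \<Longrightarrow> t2 \<in> T \<Longrightarrow>
        A s1 t1 \<Longrightarrow> A s2 t2 \<Longrightarrow> K s1 t1 \<Longrightarrow> K s2 t2 \<Longrightarrow>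
        s1 = s2 \<or> t1 = t2 \<or> A s1 t2 \<or> A s2 t1"
  shows "card {e \<in> M. \<exists>s t. s \<in> S \<and> t \<in> T \<and> K s t \<and> e = {s, t}} \<le> 1"
proof (cases "finite {e \<in> M. \<exists>s t. s \<in> S \<and> t \<in> T \<and> K s t \<and> e = {s, t}}")
  case False then show ?thesis by simp
next
  case True
  have "\<forall>e1\<in>{e \<in> M. \<exists>s t. s \<in> S \<and> t \<in> T \<and> K s t \<and> e = {s, t}}.
        \<forall>e2\<in>{e \<in> M. \<exists>s t. s \<in> S \<and> t \<in> T \<and> K s t \<and> e = {s, t}}. e1 = e2"
  proof (intro ballI, rule ccontr)
    fix e1 e2
    assume h1: "e1 \<in> {e \<in> M. \<exists>s t. s \<in> S \<and> t \<in> T \<and> K s t \<and> e = {s, t}}"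
      and h2: "e2 \<in> {e \<in> M. \<exists>s t. s \<in> S \<and> t \<in> T \<and> K s t \<and> e = {s, t}}" and ne: "e1 \<noteq> e2"
    obtain s1 t1 where 1: "e1 \<in> M" "s1 \<in> S" "t1 \<in> T" "K s1 t1" "e1 = {s1,t1}" using h1 by blast
    obtain s2 t2 where 2: "e2 \<in> M" "s2 \<in> S" "t2 \<in> T" "K s2 t2" "e2 = {s2,t2}" using h2 by blast
    obtain a1 b1 where c1: "a1 \<in> S" "b1 \<in> T" "A a1 b1" "e1 = {a1,b1}" using IM_cutE[OF assms(1-5) 1(1)] by blast
    obtain a2 b2 where c2: "a2 \<in> S" "b2 \<in> T" "A a2 b2" "e2 = {a2,b2}" using IM_cutE[OF assms(1-5) 2(1)] by blast
    have n1: "a1 = s1 \<and> b1 = t1" using pair_norm[of a1 b1 s1 t1 S T] c1 1 assms(2) by simp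
    have n2: "a2 = s2 \<and> b2 = t2" using pair_norm[of a2 b2 s2 t2 S T] c2 2 assms(2) by simp
    have P: "s1 \<noteq> s2 \<and> t1 \<noteq> t2 \<and> \<not> A s1 t2 \<and> \<not> A s2 t1"
      using IM_pair[OF assms(1-5), of s1 t1 s2 t2] 1 2 ne by simp
    have "s1 = s2 \<or> t1 = t2 \<or> A s1 t2 \<or> A s2 t1"
      using cls[of s1 s2 t1 t2] 1 2 c1 c2 n1 n2 by simp
    then show False using P by blast
  qed
  then show ?thesis using card_le_Suc0_iff_eq[OF True] by simp
qed

lemma IM_insert:
  assumes "symr A" "S \<inter> T = {}" "S \<subseteq> V" "T \<subseteq> V" "IM V A S T M"
    and st: "s \<in> S" "t \<in> T" "A s t"
    and far: "\<And>s' t'. {s', t'} \<in> M \<Longrightarrow> s' \<in> S \<Longrightarrow> t' \<in> T \<Longrightarrow> s \<noteq> s' \<and> t \<noteq> t' \<and> \<not> A s t' \<and> \<not> A s' t"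
  shows "IM V A S T (insert {s, t} M) \<and> {s, t} \<notin> M"
proof
  show "{s, t} \<notin> M" using far[of s t] st by blast
  show "IM V A S T (insert {s, t} M)"
  proof (rule IM_intro[OF assms(1-4)])
    fix e assume "e \<in> insert {s, t} M"
    then show "\<exists>s t. s \<in> S \<and> t \<in> T \<and> A s t \<and> e = {s, t}"
    proof
      assume "e = {s,t}" then show ?thesis using st by blast
    next
      assume "e \<in> M"
      then obtain a b where "a \<in> S" "b \<in> T" "A a b" "e = {a,b}" using IM_cutE[OF assms(1-5)] by metis
      then show ?thesis by blast
    qed
  next
    fix s1 t1 s2 t2
    assume h: "{s1, t1} \<in> insert {s, t} M" "{s2, t2} \<in> insert {s, t} M" "{s1, t1} \<noteq> {s2, t2}"
      "s1 \<in> S" "s2 \<in> S" "t1 \<in> T" "t2 \<in> T"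
    have sy: "\<And>x y. A x y = A y x" using assms(1) unfolding symr_def by blast
    show "s1 \<noteq> s2 \<and> t1 \<noteq> t2 \<and> \<not> A s1 t2 \<and> \<not> A s2 t1"
    proof (cases "{s1,t1} = {s,t}")
      case True
      then have n: "s1 = s \<and> t1 = t" using pair_norm[of s1 t1 s t S T] h st assms(2) by simp
      have "{s2,t2} \<in> M" using h(2,3) True by auto
      then show ?thesis using far[of s2 t2] h n by auto
    next
      case F1: False
      then have m1: "{s1,t1} \<in> M" using h(1) by auto
      show ?thesis
      proof (cases "{s2,t2} = {s,t}")
        case True
        then have n: "s2 = s \<and> t2 = t" using pair_norm[of s2 t2 s t S T] h st assms(2) by simp
        then show ?thesis using far[of s1 t1] m1 h by auto
      next
        case False
        then have m2: "{s2,t2} \<in> M" using h(2) by auto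
        show ?thesis using IM_pair[OF assms(1-5) m1 m2 h(3-7)] .
      qed
    qed
  qed
qed

lemma LR_basic: "Lc \<tau> V t \<inter> Rc \<tau> V t = {}" "Lc \<tau> V t \<subseteq> V" "Rc \<tau> V t \<subseteq> V"
  unfolding Lc_def Rc_def by auto

lemma mw_le:
  assumes "finite (verts G)" "\<And>i. 1 \<le> i \<Longrightarrow> i < card (verts G) \<Longrightarrow>
     mim (bip G {v \<in> verts G. \<sigma> v \<le> i} {v \<in> verts G. \<not> \<sigma> v \<le> i}) \<le> w"
  shows "mw \<sigma> G \<le> w"
proof -
  have eq: "{mim (bip G {v \<in> verts G. \<sigma> v \<le> i} {v \<in> verts G. \<not> \<sigma> v \<le> i}) | i.
        1 \<le> i \<and> i < card (verts G)} =
     (\<lambda>i. mim (bip G {v \<in> verts G. \<sigma> v \<le> i} {v \<in> verts G. \<not> \<sigma> v \<le> i})) ` {i. 1 \<le> i \<and> i < card (verts G)}"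
    by blast
  have f: "finite ({0} \<union> {mim (bip G {v \<in> verts G. \<sigma> v \<le> i} {v \<in> verts G. \<not> \<sigma> v \<le> i}) | i.
        1 \<le> i \<and> i < card (verts G)})" unfolding eq by simp
  show ?thesis unfolding mw_def using f assms(2) by (auto simp: Max_le_iff)
qed

lemma mw_ge:
  assumes "1 \<le> i" "i < card (verts G)"
  shows "mim (bip G {v \<in> verts G. \<sigma> v \<le> i} {v \<in> verts G. \<not> \<sigma> v \<le> i}) \<le> mw \<sigma> G"
proof -
  have eq: "{mim (bip G {v \<in> verts G. \<sigma> v \<le> i} {v \<in> verts G. \<not> \<sigma> v \<le> i}) | i.
        1 \<le> i \<and> i < card (verts G)} =
     (\<lambda>i. mim (bip G {v \<in> verts G. \<sigma> v \<le> i} {v \<in> verts G. \<not> \<sigma> v \<le> i})) ` {i. 1 \<le> i \<and> i < card (verts G)}"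
    by blast
  have f: "finite ({0} \<union> {mim (bip G {v \<in> verts G. \<sigma> v \<le> i} {v \<in> verts G. \<not> \<sigma> v \<le> i}) | i.
        1 \<le> i \<and> i < card (verts G)})" unfolding eq by simp
  have "mim (bip G {v \<in> verts G. \<sigma> v \<le> i} {v \<in> verts G. \<not> \<sigma> v \<le> i}) \<in>
     {0} \<union> {mim (bip G {v \<in> verts G. \<sigma> v \<le> i} {v \<in> verts G. \<not> \<sigma> v \<le> i}) | i.
        1 \<le> i \<and> i < card (verts G)}" using assms by blast
  then show ?thesis unfolding mw_def using f by (rule Max_ge[rotated])
qed

lemma lmw_upper:
  assumes fin: "finite V" and inj: "inj_on \<tau> V"
    and ub: "\<And>t M. IM V A (Lc \<tau> V t) (Rc \<tau> V t) M \<Longrightarrow> card M \<le> w"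
  shows "lmw (mkG V A) \<le> w"
proof -
  define \<sigma> where "\<sigma> v = card {u \<in> V. \<tau> u \<le> \<tau> v}" for v
  have fs: "\<And>v. finite {u \<in> V. \<tau> u \<le> \<tau> v}" using fin by simp
  have mono: "\<And>v x. v \<in> V \<Longrightarrow> x \<in> V \<Longrightarrow> \<sigma> v \<le> \<sigma> x \<longleftrightarrow> \<tau> v \<le> \<tau> x"
  proof -
    fix v x assume vx: "v \<in> V" "x \<in> V"
    show "\<sigma> v \<le> \<sigma> x \<longleftrightarrow> \<tau> v \<le> \<tau> x"
    proof
      assume "\<tau> v \<le> \<tau> x"
      then have "{u \<in> V. \<tau> u \<le> \<tau> v} \<subseteq> {u \<in> V. \<tau> u \<le> \<tau> x}" by auto
      then show "\<sigma> v \<le> \<sigma> x" unfolding \<sigma>_def using fs by (rule card_mono[rotated])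
    next
      assume h: "\<sigma> v \<le> \<sigma> x"
      show "\<tau> v \<le> \<tau> x"
      proof (rule ccontr)
        assume "\<not> \<tau> v \<le> \<tau> x"
        then have "{u \<in> V. \<tau> u \<le> \<tau> x} \<subset> {u \<in> V. \<tau> u \<le> \<tau> v}" using vx by auto
        then have "\<sigma> x < \<sigma> v" unfolding \<sigma>_def using fs by (rule psubset_card_mono[rotated])
        then show False using h by simp
      qed
    qed
  qed
  have injs: "inj_on \<sigma> V"
  proof (rule inj_onI)
    fix v x assume "v \<in> V" "x \<in> V" "\<sigma> v = \<sigma> x"
    then have "\<tau> v \<le> \<tau> x" "\<tau> x \<le> \<tau> v" using mono by (metis order.refl)+
    then have "\<tau> v = \<tau> x" by simp
    then show "v = x" using inj \<open>v \<in> V\<close> \<open>x \<in> V\<close> unfolding inj_on_def by blast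
  qed
  have rng: "\<sigma> ` V \<subseteq> {1..card V}"
  proof
    fix y assume "y \<in> \<sigma> ` V"
    then obtain v where v: "v \<in> V" "y = \<sigma> v" by blast
    have "v \<in> {u \<in> V. \<tau> u \<le> \<tau> v}" using v by simp
    then have "1 \<le> \<sigma> v" unfolding \<sigma>_def using fs[of v] by (metis One_nat_def Suc_leI card_gt_0_iff empty_iff)
    moreover have "\<sigma> v \<le> card V" unfolding \<sigma>_def using fin by (intro card_mono) auto
    ultimately show "y \<in> {1..card V}" using v by simp
  qed
  have "card (\<sigma> ` V) = card {1..card V}" using card_image[OF injs] by simp
  then have img: "\<sigma> ` V = {1..card V}" using rng by (intro card_subset_eq) auto
  have lay: "linear_layout \<sigma> (mkG V A)" unfolding linear_layout_def bij_betw_def using injs img by simp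
  have "mw \<sigma> (mkG V A) \<le> w"
  proof (rule mw_le)
    show "finite (verts (mkG V A))" using fin by simp
  next
    fix i assume i: "1 \<le> i" "i < card (verts (mkG V A))"
    then have "i \<in> \<sigma> ` V" using img by simp
    then obtain v where v: "v \<in> V" "\<sigma> v = i" by blast
    have L: "{x \<in> verts (mkG V A). \<sigma> x \<le> i} = Lc \<tau> V (\<tau> v)"
      unfolding Lc_def using mono v by auto
    have R: "{x \<in> verts (mkG V A). \<not> \<sigma> x \<le> i} = Rc \<tau> V (\<tau> v)"
      unfolding Rc_def using mono v by auto
    show "mim (bip (mkG V A) {x \<in> verts (mkG V A). \<sigma> x \<le> i} {x \<in> verts (mkG V A). \<not> \<sigma> x \<le> i}) \<le> w"
      unfolding L R using fin ub by (rule mim_le)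
  qed
  moreover have "lmw (mkG V A) \<le> mw \<sigma> (mkG V A)" unfolding lmw_def
    by (rule Least_le) (use lay in blast)
  ultimately show ?thesis by simp
qed

lemma lmw_lower:
  assumes fin: "finite V" and sy: "symr A"
    and lb: "\<And>\<sigma>. inj_on \<sigma> V \<Longrightarrow> \<exists>t M. IM V A (Lc \<sigma> V t) (Rc \<sigma> V t) M \<and> w \<le> card M"
  shows "w \<le> lmw (mkG V A)"
proof -
  obtain h where "bij_betw h V {1..card V}" using finite_same_card_bij[OF fin, of "{1..card V}"] by auto
  then have "linear_layout h (mkG V A)" unfolding linear_layout_def by simp
  then have "\<exists>w \<sigma>. linear_layout \<sigma> (mkG V A) \<and> mw \<sigma> (mkG V A) = w" by blast
  then have "\<exists>\<sigma>. linear_layout \<sigma> (mkG V A) \<and> mw \<sigma> (mkG V A) = lmw (mkG V A)"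
    unfolding lmw_def by (rule LeastI_ex)
  then obtain \<sigma> where lay: "linear_layout \<sigma> (mkG V A)" and eq: "mw \<sigma> (mkG V A) = lmw (mkG V A)" by blast
  have bij: "bij_betw \<sigma> V {1..card V}" using lay unfolding linear_layout_def by simp
  then have inj: "inj_on \<sigma> V" by (rule bij_betw_imp_inj_on)
  obtain t M where tM: "IM V A (Lc \<sigma> V t) (Rc \<sigma> V t) M" "w \<le> card M" using lb[OF inj] by blast
  show ?thesis
  proof (cases "w = 0")
    case True then show ?thesis by simp
  next
    case False
    then have "M \<noteq> {}" using tM(2) by auto
    then obtain e where e: "e \<in> M" by blast
    obtain s u where su: "s \<in> Lc \<sigma> V t" "u \<in> Rc \<sigma> V t"
      using IM_cutE[OF sy LR_basic tM(1) e] by metis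
    have "\<sigma> s \<in> {1..card V}" "\<sigma> u \<in> {1..card V}" using su bij unfolding Lc_def Rc_def bij_betw_def by auto
    then have t: "1 \<le> t" "t < card V" using su unfolding Lc_def Rc_def by auto
    have "w \<le> mim (bip (mkG V A) (Lc \<sigma> V t) (Rc \<sigma> V t))" using tM mim_ge[OF fin tM(1)] by simp
    also have "\<dots> \<le> mw \<sigma> (mkG V A)"
      using mw_ge[of t "mkG V A" \<sigma>] t unfolding Lc_def Rc_def by simp
    finally show ?thesis using eq by simp
  qed
qed

definition Tv :: "nat \<Rightarrow> nat list set" where
  "Tv d = {w. (\<forall>x\<in>set w. x < 3) \<and> length w \<le> d}"

definition tadj :: "nat list \<Rightarrow> nat list \<Rightarrow> bool" where
  "tadj x y \<longleftrightarrow> (\<exists>a. y = x @ [a]) \<or> (\<exists>a. x = y @ [a])"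

definition sqadj :: "nat list \<Rightarrow> nat list \<Rightarrow> bool" where
  "sqadj x y \<longleftrightarrow> x \<noteq> y \<and> ((\<exists>a. y = x @ [a]) \<or> (\<exists>a. x = y @ [a]) \<or>
     (\<exists>a b. y = x @ [a, b]) \<or> (\<exists>a b. x = y @ [a, b]) \<or> (\<exists>p a b. x = p @ [a] \<and> y = p @ [b]))"

lemma symr_tadj: "symr tadj" unfolding symr_def tadj_def by blast
lemma symr_sqadj: "symr sqadj" unfolding symr_def sqadj_def by blast

lemma tadj_sq: "tadj x y \<Longrightarrow> sqadj x y"
  unfolding tadj_def sqadj_def by auto

lemma finite_Tv: "finite (Tv d)"
proof -
  have "Tv d = {xs. set xs \<subseteq> {..<3} \<and> length xs \<le> d}" unfolding Tv_def by auto
  then show ?thesis using finite_lists_length_le[of "{..<3::nat}" d] by simp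
qed

lemma Tv_prefix: "p @ q \<in> Tv d \<Longrightarrow> p \<in> Tv d"
  unfolding Tv_def by auto

lemma Tv_Suc2: "(i # j # w \<in> Tv (Suc (Suc d))) \<longleftrightarrow> i < 3 \<and> j < 3 \<and> w \<in> Tv d"
  unfolding Tv_def by auto

lemma tadj_Cons: "tadj (c # x) (c # y) \<longleftrightarrow> tadj x y"
  unfolding tadj_def by auto

lemma sqadj_Cons: "sqadj (c # x) (c # y) \<longleftrightarrow> sqadj x y"
proof (cases "x = y")
  case True then show ?thesis unfolding sqadj_def by simp
next
  case False
  have sib: "(\<exists>p a b. c # x = p @ [a] \<and> c # y = p @ [b]) \<longleftrightarrow> (\<exists>p a b. x = p @ [a] \<and> y = p @ [b])"
  proof
    assume "\<exists>p a b. c # x = p @ [a] \<and> c # y = p @ [b]"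
    then obtain p a b where h: "c # x = p @ [a]" "c # y = p @ [b]" by blast
    show "\<exists>p a b. x = p @ [a] \<and> y = p @ [b]"
    proof (cases p)
      case Nil then show ?thesis using h False by simp
    next
      case (Cons d p') then show ?thesis using h by auto
    qed
  next
    assume "\<exists>p a b. x = p @ [a] \<and> y = p @ [b]"
    then obtain p a b where "x = p @ [a]" "y = p @ [b]" by blast
    then have "c # x = (c # p) @ [a] \<and> c # y = (c # p) @ [b]" by simp
    then show "\<exists>p a b. c # x = p @ [a] \<and> c # y = p @ [b]" by blast
  qed
  show ?thesis unfolding sqadj_def using False sib by auto
qed

lemma Hverts_Tv: "Hverts k = Tv (2 * k)"
proof (induction k)
  case 0 then show ?case unfolding Tv_def by auto
next
  case (Suc k)
  show ?case
  proof (rule set_eqI)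
    fix w
    show "w \<in> Hverts (Suc k) \<longleftrightarrow> w \<in> Tv (2 * Suc k)"
    proof (cases w)
      case Nil then show ?thesis unfolding Tv_def by simp
    next
      case (Cons i r)
      show ?thesis
      proof (cases r)
        case Nil then show ?thesis using Cons unfolding Tv_def by auto
      next
        case (Cons j s)
        have "w \<in> Hverts (Suc k) \<longleftrightarrow> i < 3 \<and> j < 3 \<and> s \<in> Hverts k"
          using Cons \<open>w = i # r\<close> Suc.IH by (auto simp: Tv_def)
        also have "\<dots> \<longleftrightarrow> w \<in> Tv (2 * Suc k)"
          using Suc Cons \<open>w = i # r\<close> Tv_Suc2[of i j s "2*k"] by simp
        finally show ?thesis .
      qed
    qed
  qed
qed

lemma Hedges_char: "e \<in> Hedges k \<longleftrightarrow> (\<exists>x a. x @ [a] \<in> Tv (2 * k) \<and> e = {x, x @ [a]})"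
proof (induction k arbitrary: e)
  case 0 then show ?case unfolding Tv_def by auto
next
  case (Suc k)
  have unf: "e \<in> Hedges (Suc k) \<longleftrightarrow> (\<exists>i. i < 3 \<and> e = {[], [i]}) \<or> (\<exists>i j. i < 3 \<and> j < 3 \<and> e = {[i], [i, j]})
     \<or> (\<exists>i j a b. i < 3 \<and> j < 3 \<and> {a, b} \<in> Hedges k \<and> e = {[i, j] @ a, [i, j] @ b})"
    unfolding Hedges.simps Un_iff mem_Collect_eq by blast
  show ?case
  proof
    assume "e \<in> Hedges (Suc k)"
    then consider (A) i where "i < 3" "e = {[], [i]}" | (B) i j where "i < 3" "j < 3" "e = {[i], [i, j]}"
      | (C) i j a b where "i < 3" "j < 3" "{a, b} \<in> Hedges k" "e = {[i, j] @ a, [i, j] @ b}"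
      using unf by blast
    then show "\<exists>x a. x @ [a] \<in> Tv (2 * Suc k) \<and> e = {x, x @ [a]}"
    proof cases
      case A
      then have "[] @ [i] \<in> Tv (2 * Suc k) \<and> e = {[], [] @ [i]}" unfolding Tv_def by simp
      then show ?thesis by blast
    next
      case B
      then have "[i] @ [j] \<in> Tv (2 * Suc k) \<and> e = {[i], [i] @ [j]}" unfolding Tv_def by simp
      then show ?thesis by blast
    next
      case C
      obtain x c where xc: "x @ [c] \<in> Tv (2 * k)" "{a, b} = {x, x @ [c]}" using Suc.IH C(3) by blast
      have "e = (\<lambda>w. [i, j] @ w) ` {a, b}" using C(4) by simp
      also have "\<dots> = {i # j # x, (i # j # x) @ [c]}" using xc(2) by simp
      finally have "e = {i # j # x, (i # j # x) @ [c]}" .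
      moreover have "(i # j # x) @ [c] \<in> Tv (2 * Suc k)" using xc(1) C(1,2) Tv_Suc2 by simp
      ultimately show ?thesis by blast
    qed
  next
    assume "\<exists>x a. x @ [a] \<in> Tv (2 * Suc k) \<and> e = {x, x @ [a]}"
    then obtain x c where xc: "x @ [c] \<in> Tv (2 * Suc k)" "e = {x, x @ [c]}" by blast
    show "e \<in> Hedges (Suc k)"
    proof (cases x)
      case Nil
      then have "c < 3" using xc(1) unfolding Tv_def by simp
      moreover have "e = {[], [c]}" using xc(2) Nil by simp
      ultimately show ?thesis using unf by blast
    next
      case (Cons i r)
      show ?thesis
      proof (cases r)
        case Nil
        then have "i < 3" "c < 3" using xc(1) \<open>x = i # r\<close> unfolding Tv_def by auto
        moreover have "e = {[i], [i, c]}" using xc(2) Nil \<open>x = i # r\<close> by simp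
        ultimately show ?thesis using unf by blast
      next
        case (Cons j s)
        have ij: "i < 3" "j < 3" "s @ [c] \<in> Tv (2 * k)"
          using xc(1) Tv_Suc2[of i j "s @ [c]" "2*k"] Cons \<open>x = i # r\<close> by auto
        have "{s, s @ [c]} \<in> Hedges k" using Suc.IH ij(3) by blast
        moreover have "e = {[i, j] @ s, [i, j] @ (s @ [c])}" using xc(2) Cons \<open>x = i # r\<close> by simp
        ultimately show ?thesis using unf ij(1,2) by blast
      qed
    qed
  qed
qed

lemma Htree_mkG: "Htree k = mkG (Tv (2 * k)) tadj"
proof -
  have "Hedges k = edges (mkG (Tv (2 * k)) tadj)"
  proof (rule set_eqI)
    fix e
    show "e \<in> Hedges k \<longleftrightarrow> e \<in> edges (mkG (Tv (2 * k)) tadj)"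
    proof
      assume "e \<in> Hedges k"
      then have "\<exists>x a. x @ [a] \<in> Tv (2 * k) \<and> e = {x, x @ [a]}" by (rule Hedges_char[THEN iffD1])
      then obtain x a where xa: "x @ [a] \<in> Tv (2 * k)" "e = {x, x @ [a]}" by blast
      have "x \<in> Tv (2 * k)" using Tv_prefix xa(1) by blast
      moreover have "tadj x (x @ [a])" unfolding tadj_def by blast
      moreover have "x \<noteq> x @ [a]" by simp
      ultimately show "e \<in> edges (mkG (Tv (2 * k)) tadj)" unfolding edges_mkG mem_Collect_eq
        using xa by blast
    next
      assume "e \<in> edges (mkG (Tv (2 * k)) tadj)"
      then obtain x y where xy: "e = {x, y}" "x \<in> Tv (2*k)" "y \<in> Tv (2*k)" "tadj x y"
        unfolding edges_mkG mem_Collect_eq by blast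
      from xy(4) show "e \<in> Hedges k" unfolding tadj_def
      proof (elim disjE exE)
        fix a assume "y = x @ [a]"
        then have "\<exists>x a. x @ [a] \<in> Tv (2 * k) \<and> e = {x, x @ [a]}" using xy by blast
        then show ?thesis by (rule Hedges_char[THEN iffD2])
      next
        fix a assume "x = y @ [a]" then have "e = {y, y @ [a]}" using xy(1) by (simp add: insert_commute)
        then have "\<exists>x a. x @ [a] \<in> Tv (2 * k) \<and> e = {x, x @ [a]}" using xy \<open>x = y @ [a]\<close> by blast
        then show ?thesis by (rule Hedges_char[THEN iffD2])
      qed
    qed
  qed
  moreover have "mkG (Tv (2 * k)) tadj = (Tv (2 * k), edges (mkG (Tv (2 * k)) tadj))"
    unfolding mkG_def edges_def by simp
  ultimately show ?thesis unfolding Htree_def using Hverts_Tv by simp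
qed

lemma sq_char:
  assumes "x \<in> Tv d" "y \<in> Tv d" "x \<noteq> y"
  shows "(tadj x y \<or> (\<exists>z. z \<in> Tv d \<and> x \<noteq> z \<and> z \<noteq> y \<and> tadj x z \<and> tadj z y)) \<longleftrightarrow> sqadj x y"
proof
  assume "tadj x y \<or> (\<exists>z. z \<in> Tv d \<and> x \<noteq> z \<and> z \<noteq> y \<and> tadj x z \<and> tadj z y)"
  then show "sqadj x y"
  proof
    assume "tadj x y" then show ?thesis by (rule tadj_sq)
  next
    assume "\<exists>z. z \<in> Tv d \<and> x \<noteq> z \<and> z \<noteq> y \<and> tadj x z \<and> tadj z y"
    then obtain z where z: "tadj x z" "tadj z y" by blast
    from z show ?thesis unfolding tadj_def
    proof (elim disjE exE)
      fix a b assume "z = x @ [a]" "y = z @ [b]"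
      then show ?thesis using assms(3) unfolding sqadj_def by auto
    next
      fix a b assume "z = x @ [a]" "z = y @ [b]"
      then show ?thesis using assms(3) by simp
    next
      fix a b assume "x = z @ [a]" "y = z @ [b]"
      then show ?thesis using assms(3) unfolding sqadj_def by blast
    next
      fix a b assume "x = z @ [a]" "z = y @ [b]"
      then show ?thesis using assms(3) unfolding sqadj_def by auto
    qed
  qed
next
  assume "sqadj x y"
  then have "(\<exists>a. y = x @ [a]) \<or> (\<exists>a. x = y @ [a]) \<or>
     (\<exists>a b. y = x @ [a, b]) \<or> (\<exists>a b. x = y @ [a, b]) \<or> (\<exists>p a b. x = p @ [a] \<and> y = p @ [b])"
    unfolding sqadj_def by blast
  then consider (c1) a where "y = x @ [a]" | (c2) a where "x = y @ [a]" | (c3) a b where "y = x @ [a, b]"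
    | (c4) a b where "x = y @ [a, b]" | (c5) p a b where "x = p @ [a]" "y = p @ [b]" by blast
  then show "tadj x y \<or> (\<exists>z. z \<in> Tv d \<and> x \<noteq> z \<and> z \<noteq> y \<and> tadj x z \<and> tadj z y)"
  proof cases
    case c1 then show ?thesis unfolding tadj_def by blast
  next
    case c2 then show ?thesis unfolding tadj_def by blast
  next
    case (c3 a b)
    note h = c3
    have "x @ [a] \<in> Tv d" using assms(2) h Tv_prefix[of "x @ [a]" "[b]"] by simp
    moreover have "tadj x (x @ [a])" "tadj (x @ [a]) y" unfolding tadj_def using h by auto
    moreover have "x \<noteq> x @ [a]" "x @ [a] \<noteq> y" using h by auto
    ultimately show ?thesis by blast
  next
    case (c4 a b)
    note h = c4
    have "y @ [a] \<in> Tv d" using assms(1) h Tv_prefix[of "y @ [a]" "[b]"] by simp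
    moreover have "tadj x (y @ [a])" "tadj (y @ [a]) y" unfolding tadj_def using h by auto
    moreover have "x \<noteq> y @ [a]" "y @ [a] \<noteq> y" using h by auto
    ultimately show ?thesis by blast
  next
    case (c5 p a b)
    note h = c5
    have "p \<in> Tv d" using assms(1) h Tv_prefix by blast
    moreover have "tadj x p" "tadj p y" unfolding tadj_def using h by auto
    moreover have "x \<noteq> p" "p \<noteq> y" using h by auto
    ultimately show ?thesis by blast
  qed
qed

lemma square_mkG: "graph_square (mkG (Tv d) tadj) = mkG (Tv d) sqadj"
proof -
  let ?V = "Tv d"
  have E: "\<And>u v. {u, v} \<in> edges (mkG ?V tadj) \<longleftrightarrow> u \<in> ?V \<and> v \<in> ?V \<and> u \<noteq> v \<and> tadj u v"
    by (rule in_edges_mkG[OF symr_tadj])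
  have key: "\<And>x y. x \<in> ?V \<Longrightarrow> y \<in> ?V \<Longrightarrow> x \<noteq> y \<Longrightarrow>
     ({x, y} \<in> edges (mkG ?V tadj) \<or> (\<exists>z. {x, z} \<in> edges (mkG ?V tadj) \<and> {z, y} \<in> edges (mkG ?V tadj)))
     \<longleftrightarrow> sqadj x y"
  proof -
    fix x y assume h: "x \<in> ?V" "y \<in> ?V" "x \<noteq> y"
    have "({x, y} \<in> edges (mkG ?V tadj) \<or> (\<exists>z. {x, z} \<in> edges (mkG ?V tadj) \<and> {z, y} \<in> edges (mkG ?V tadj)))
      \<longleftrightarrow> (tadj x y \<or> (\<exists>z. z \<in> ?V \<and> x \<noteq> z \<and> z \<noteq> y \<and> tadj x z \<and> tadj z y))"
      unfolding E using h by blast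
    also have "\<dots> \<longleftrightarrow> sqadj x y" by (rule sq_char[OF h])
    finally show "({x, y} \<in> edges (mkG ?V tadj) \<or> (\<exists>z. {x, z} \<in> edges (mkG ?V tadj) \<and> {z, y} \<in> edges (mkG ?V tadj)))
     \<longleftrightarrow> sqadj x y" .
  qed
  have "{{x, y} |x y. x \<in> ?V \<and> y \<in> ?V \<and> x \<noteq> y \<and>
      ({x, y} \<in> edges (mkG ?V tadj) \<or> (\<exists>z. {x, z} \<in> edges (mkG ?V tadj) \<and> {z, y} \<in> edges (mkG ?V tadj)))}
    = {{x, y} |x y. x \<in> ?V \<and> y \<in> ?V \<and> x \<noteq> y \<and> sqadj x y}"
  proof (rule Collect_cong)
    fix e
    show "(\<exists>x y. e = {x, y} \<and> x \<in> ?V \<and> y \<in> ?V \<and> x \<noteq> y \<and>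
      ({x, y} \<in> edges (mkG ?V tadj) \<or> (\<exists>z. {x, z} \<in> edges (mkG ?V tadj) \<and> {z, y} \<in> edges (mkG ?V tadj))))
      \<longleftrightarrow> (\<exists>x y. e = {x, y} \<and> x \<in> ?V \<and> y \<in> ?V \<and> x \<noteq> y \<and> sqadj x y)"
    proof
      assume "\<exists>x y. e = {x, y} \<and> x \<in> ?V \<and> y \<in> ?V \<and> x \<noteq> y \<and>
      ({x, y} \<in> edges (mkG ?V tadj) \<or> (\<exists>z. {x, z} \<in> edges (mkG ?V tadj) \<and> {z, y} \<in> edges (mkG ?V tadj)))"
      then obtain x y where h: "e = {x, y}" "x \<in> ?V" "y \<in> ?V" "x \<noteq> y"
        "({x, y} \<in> edges (mkG ?V tadj) \<or> (\<exists>z. {x, z} \<in> edges (mkG ?V tadj) \<and> {z, y} \<in> edges (mkG ?V tadj)))"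
        by blast
      have "sqadj x y" using key[OF h(2,3,4)] h(5) by blast
      then show "\<exists>x y. e = {x, y} \<and> x \<in> ?V \<and> y \<in> ?V \<and> x \<noteq> y \<and> sqadj x y" using h by blast
    next
      assume "\<exists>x y. e = {x, y} \<and> x \<in> ?V \<and> y \<in> ?V \<and> x \<noteq> y \<and> sqadj x y"
      then obtain x y where h: "e = {x, y}" "x \<in> ?V" "y \<in> ?V" "x \<noteq> y" "sqadj x y" by blast
      have "({x, y} \<in> edges (mkG ?V tadj) \<or> (\<exists>z. {x, z} \<in> edges (mkG ?V tadj) \<and> {z, y} \<in> edges (mkG ?V tadj)))"
        using key[OF h(2,3,4)] h(5) by blast
      then show "\<exists>x y. e = {x, y} \<and> x \<in> ?V \<and> y \<in> ?V \<and> x \<noteq> y \<and>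
      ({x, y} \<in> edges (mkG ?V tadj) \<or> (\<exists>z. {x, z} \<in> edges (mkG ?V tadj) \<and> {z, y} \<in> edges (mkG ?V tadj)))"
        using h by blast
    qed
  qed
  then show ?thesis unfolding graph_square_def mkG_def verts_def edges_def by simp
qed

lemma delete_mkG: "delete_vertex (mkG V A) v = mkG (V - {v}) A"
proof -
  have "{e \<in> edges (mkG V A). v \<notin> e} = edges (mkG (V - {v}) A)"
    unfolding edges_mkG by blast
  then show ?thesis unfolding delete_vertex_def mkG_def verts_def edges_def by simp
qed

fun tau :: "nat \<Rightarrow> nat list \<Rightarrow> nat" where
  "tau 0 w = 0"
| "tau (Suc k) [] = 0"
| "tau (Suc k) [i] = (4 * i + 4) * 16 ^ k"
| "tau (Suc k) (i # j # w) = (4 * i + j + 1) * 16 ^ k + tau k w"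

fun code :: "nat list \<Rightarrow> nat" where
  "code [] = 0"
| "code [i] = 4 * i + 4"
| "code (i # j # w) = 4 * i + j + 1"

fun rest :: "nat \<Rightarrow> nat list \<Rightarrow> nat" where
  "rest k (i # j # w) = tau k w"
| "rest k _ = 0"

lemma tau_Suc: "tau (Suc k) w = code w * 16 ^ k + rest k w"
  by (cases w rule: code.cases) auto

lemma tau_bound: "w \<in> Tv (2 * k) \<Longrightarrow> tau k w < 16 ^ k"
proof (induction k arbitrary: w)
  case 0 then show ?case by simp
next
  case (Suc k)
  show ?case
  proof (cases w rule: code.cases)
    case 1 then show ?thesis by simp
  next
    case (2 i)
    then have "i < 3" using Suc.prems unfolding Tv_def by simp
    then have "(4 * i + 4) * 16 ^ k \<le> 12 * 16 ^ k" by simp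
    also have "\<dots> < 16 ^ Suc k" by simp
    finally show ?thesis using 2 by simp
  next
    case (3 i j v)
    then have ij: "i < 3" "j < 3" "v \<in> Tv (2 * k)" using Suc.prems Tv_Suc2[of i j v "2*k"] by auto
    have "tau k v < 16 ^ k" using Suc.IH ij(3) by blast
    then have "(4 * i + j + 1) * 16 ^ k + tau k v < (4 * i + j + 1) * 16 ^ k + 16 ^ k" by simp
    also have "\<dots> = (4 * i + j + 2) * 16 ^ k" by simp
    also have "\<dots> \<le> 12 * 16 ^ k" using ij by (intro mult_le_mono1) simp
    finally have "(4 * i + j + 1) * 16 ^ k + tau k v < 12 * 16 ^ k" .
    also have "\<dots> < 16 ^ Suc k" by simp
    finally show ?thesis using 3 by simp
  qed
qed

lemma rest_bound: "w \<in> Tv (2 * Suc k) \<Longrightarrow> rest k w < 16 ^ k"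
proof (cases w rule: code.cases)
  case (3 i j v)
  assume "w \<in> Tv (2 * Suc k)"
  then have "v \<in> Tv (2 * k)" using 3 Tv_Suc2[of i j v "2*k"] by auto
  then show ?thesis using 3 tau_bound by simp
qed auto

lemma arith_cmp:
  fixes N c b q r :: nat
  assumes "b < N" "r < N"
  shows "c * N + b \<le> q * N + r \<longleftrightarrow> c < q \<or> (c = q \<and> b \<le> r)"
proof (cases "c < q")
  case True
  then have "Suc c \<le> q" by simp
  then have "Suc c * N \<le> q * N" by (rule mult_le_mono1)
  then show ?thesis using True assms by simp
next
  case False
  show ?thesis
  proof (cases "c = q")
    case True then show ?thesis by simp
  next
    case F: False
    then have "Suc q \<le> c" using False by simp
    then have "Suc q * N \<le> c * N" by (rule mult_le_mono1)
    then show ?thesis using False F assms by simp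
  qed
qed

definition Lside :: "nat \<Rightarrow> nat \<Rightarrow> nat \<Rightarrow> nat list \<Rightarrow> bool" where
  "Lside k q r w \<longleftrightarrow> code w < q \<or> (code w = q \<and> rest k w \<le> r)"

lemma side_Suc:
  assumes "w \<in> Tv (2 * Suc k)"
  shows "tau (Suc k) w \<le> t \<longleftrightarrow> Lside k (t div 16 ^ k) (t mod 16 ^ k) w"
proof -
  have t: "t = (t div 16 ^ k) * 16 ^ k + t mod 16 ^ k" by (rule div_mult_mod_eq[symmetric])
  have "tau (Suc k) w \<le> t \<longleftrightarrow> code w * 16 ^ k + rest k w \<le> (t div 16 ^ k) * 16 ^ k + t mod 16 ^ k"
    using tau_Suc t by simp
  also have "\<dots> \<longleftrightarrow> Lside k (t div 16 ^ k) (t mod 16 ^ k) w"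
    unfolding Lside_def using arith_cmp[OF rest_bound[OF assms], of "t mod 16 ^ k"] by simp
  finally show ?thesis .
qed

lemma tau_inj: "inj_on (tau k) (Tv (2 * k))"
proof (induction k)
  case 0 then show ?case unfolding Tv_def inj_on_def by simp
next
  case (Suc k)
  show ?case
  proof (rule inj_onI)
    fix v w assume v: "v \<in> Tv (2 * Suc k)" and w: "w \<in> Tv (2 * Suc k)" and eq: "tau (Suc k) v = tau (Suc k) w"
    have "code v * 16 ^ k + rest k v \<le> code w * 16 ^ k + rest k w"
         "code w * 16 ^ k + rest k w \<le> code v * 16 ^ k + rest k v"
      using eq tau_Suc by simp_all
    then have ce: "code v = code w" and re: "rest k v = rest k w"
      using arith_cmp[OF rest_bound[OF v] rest_bound[OF w]] arith_cmp[OF rest_bound[OF w] rest_bound[OF v]]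
      by auto
    show "v = w"
    proof (cases v rule: code.cases)
      case 1 then show ?thesis using ce by (cases w rule: code.cases) auto
    next
      case (2 i)
      show ?thesis
      proof (cases w rule: code.cases)
        case 1 then show ?thesis using ce 2 by simp
      next
        case (2 i') then show ?thesis using ce \<open>v = [i]\<close> by simp
      next
        case (3 i' j' y)
        have "j' < 3" using w 3 unfolding Tv_def by simp
        moreover have "4 * i + 4 = 4 * i' + j' + 1" using ce \<open>v = [i]\<close> 3 by simp
        ultimately show ?thesis by presburger
      qed
    next
      case (3 i j x)
      then have vx: "i < 3" "j < 3" "x \<in> Tv (2 * k)" using v Tv_Suc2[of i j x "2*k"] by auto
      show ?thesis
      proof (cases w rule: code.cases)
        case 1 then show ?thesis using ce 3 by simp
      next
        case (2 i')
        then have "4 * i + j + 1 = 4 * i' + 4" using ce 3 by simp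
        then show ?thesis using vx by presburger
      next
        case (3 i' j' y)
        note w3 = this
        then have wy: "i' < 3" "j' < 3" "y \<in> Tv (2 * k)" using w Tv_Suc2[of i' j' y "2*k"] by auto
        have "4 * i + j + 1 = 4 * i' + j' + 1" using ce \<open>v = i # j # x\<close> w3 by simp
        then have "i = i' \<and> j = j'" using vx wy by presburger
        moreover have "tau k x = tau k y" using re \<open>v = i # j # x\<close> w3 by simp
        then have "x = y" using Suc.IH vx(3) wy(3) unfolding inj_on_def by blast
        ultimately show ?thesis using \<open>v = i # j # x\<close> w3 by simp
      qed
    qed
  qed
qed

lemma sq_shapes:
  assumes "sqadj s u"
  shows "s = [] \<or> u = [] \<or> (length s = 1 \<and> length u = 1)
   \<or> (\<exists>i' a w. s = [i'] \<and> u = i' # a # w) \<or> (\<exists>i' a w. u = [i'] \<and> s = i' # a # w)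
   \<or> (\<exists>i' a b. s = [i', a] \<and> u = [i', b])
   \<or> (\<exists>i' j' x y. s = i' # j' # x \<and> u = i' # j' # y)"
proof -
  have "(\<exists>a. u = s @ [a]) \<or> (\<exists>a. s = u @ [a]) \<or>
     (\<exists>a b. u = s @ [a, b]) \<or> (\<exists>a b. s = u @ [a, b]) \<or> (\<exists>p a b. s = p @ [a] \<and> u = p @ [b])"
    using assms unfolding sqadj_def by blast
  then consider (c1) a where "u = s @ [a]" | (c2) a where "s = u @ [a]" | (c3) a b where "u = s @ [a, b]"
    | (c4) a b where "s = u @ [a, b]" | (c5) p a b where "s = p @ [a]" "u = p @ [b]" by blast
  then show ?thesis
  proof cases
    case (c1 a)
    then show ?thesis by (cases s rule: code.cases) auto
  next
    case (c2 a)
    then show ?thesis by (cases u rule: code.cases) auto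
  next
    case (c3 a b)
    then show ?thesis by (cases s rule: code.cases) auto
  next
    case (c4 a b)
    then show ?thesis by (cases u rule: code.cases) auto
  next
    case (c5 p a b)
    then show ?thesis by (cases p rule: code.cases) auto
  qed
qed

lemma Lside_nil: "Lside k q r []"
  unfolding Lside_def by auto

lemma Lside_one: "Lside k q r [i] \<longleftrightarrow> 4 * i + 4 \<le> q"
  unfolding Lside_def by auto

lemma Lside_two: "Lside k q r (i # a # w) \<longleftrightarrow> 4 * i + a + 1 < q \<or> (4 * i + a + 1 = q \<and> tau k w \<le> r)"
  unfolding Lside_def by simp

lemma Tv_sec: "i # a # w \<in> Tv d \<Longrightarrow> a < 3"
  unfolding Tv_def by simp

lemma Tv_fst: "i # w \<in> Tv d \<Longrightarrow> i < 3"
  unfolding Tv_def by simp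

lemma CL:
  assumes s: "s \<in> Tv (2 * Suc k)" and u: "u \<in> Tv (2 * Suc k)"
    and L: "Lside k q r s" and R: "\<not> Lside k q r u" and adj: "sqadj s u"
  shows "s = [] \<or> (length s = 1 \<and> length u = 1)
     \<or> (\<exists>i a b. s = [i, a] \<and> u = [i, b] \<and> 4 * i + a + 1 \<le> q \<and> q \<le> 4 * i + b + 1 \<and> a < 3 \<and> b < 3)
     \<or> (\<exists>i a w. u = [i] \<and> s = i # a # w \<and> 4 * i + a + 1 \<le> q \<and> q < 4 * i + 4 \<and> a < 3)
     \<or> (\<exists>i j x y. s = i # j # x \<and> u = i # j # y \<and> q = 4 * i + j + 1 \<and> i < 3 \<and> j < 3)"
proof -
  from sq_shapes[OF adj] consider "s = []" | "u = []" | "length s = 1 \<and> length u = 1"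
    | (d) i' a w where "s = [i']" "u = i' # a # w" | (e) i' a w where "u = [i']" "s = i' # a # w"
    | (f) i' a b where "s = [i', a]" "u = [i', b]"
    | (g) i' j' x y where "s = i' # j' # x" "u = i' # j' # y" by blast
  then show ?thesis
  proof cases
    case 1 then show ?thesis by simp
  next
    case 2 then show ?thesis using R Lside_nil by simp
  next
    case 3 then show ?thesis by simp
  next
    case d
    have "a < 3" using u d Tv_sec by blast
    moreover have "4 * i' + 4 \<le> q" using L d Lside_one by simp
    moreover have "\<not> 4 * i' + a + 1 < q" using R d Lside_two by simp
    ultimately show ?thesis by simp
  next
    case e
    have "a < 3" using s e Tv_sec by blast
    moreover have "\<not> 4 * i' + 4 \<le> q" using R e Lside_one by simp
    moreover have "4 * i' + a + 1 \<le> q" using L e Lside_two by auto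
    ultimately show ?thesis using e by auto
  next
    case f
    have "a < 3" "b < 3" using s u f Tv_sec by blast+
    moreover have "4 * i' + a + 1 \<le> q" using L f Lside_two by auto
    moreover have "q \<le> 4 * i' + b + 1" using R f Lside_two by auto
    ultimately show ?thesis using f by blast
  next
    case g
    have "i' < 3" "j' < 3" using s g Tv_sec Tv_fst by blast+
    moreover have "q = 4 * i' + j' + 1" using L R g Lside_two by auto
    ultimately show ?thesis using g by blast
  qed
qed

lemma CL_copy:
  assumes s: "s \<in> Tv (2 * Suc k)" and u: "u \<in> Tv (2 * Suc k)"
    and L: "Lside k q r s" and R: "\<not> Lside k q r u" and adj: "sqadj s u"
    and ij: "i < 3" "j < 3" "q = 4 * i + j + 1"
    and nin: "\<not> (\<exists>x y. s = i # j # x \<and> u = i # j # y)"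
  shows "(s = [] \<or> u = [i] \<or> (length s = 1 \<and> length u = 1)) \<or>
     (length s = 2 \<and> length u = 2 \<and> hd s = i \<and> hd u = i)"
proof -
  from CL[OF s u L R adj] consider "s = [] \<or> (length s = 1 \<and> length u = 1)"
     | (f) i' a b where "s = [i', a]" "u = [i', b]" "4 * i' + a + 1 \<le> q" "q \<le> 4 * i' + b + 1" "a < 3" "b < 3"
     | (e) i' a w where "u = [i']" "s = i' # a # w" "4 * i' + a + 1 \<le> q" "q < 4 * i' + 4" "a < 3"
     | (g) i' j' x y where "s = i' # j' # x" "u = i' # j' # y" "q = 4 * i' + j' + 1" "i' < 3" "j' < 3"
    by blast
  then show ?thesis
  proof cases
    case 1 then show ?thesis by blast
  next
    case f
    have "i' = i" using f ij by presburger
    then show ?thesis using f by simp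
  next
    case e
    have "i' = i" using e ij by presburger
    then show ?thesis using e by simp
  next
    case g
    have "i' = i \<and> j' = j" using g ij by presburger
    then show ?thesis using g nin by blast
  qed
qed

lemma CL_bnd:
  assumes s: "s \<in> Tv (2 * Suc k)" and u: "u \<in> Tv (2 * Suc k)"
    and L: "Lside k q r s" and R: "\<not> Lside k q r u" and adj: "sqadj s u"
    and nc: "q mod 4 = 0 \<or> 12 \<le> q"
  shows "s = [] \<or> (length s = 1 \<and> length u = 1)"
proof -
  from CL[OF s u L R adj] consider "s = [] \<or> (length s = 1 \<and> length u = 1)"
     | (f) i' a b where "s = [i', a]" "u = [i', b]" "4 * i' + a + 1 \<le> q" "q \<le> 4 * i' + b + 1" "a < 3" "b < 3"
     | (e) i' a w where "u = [i']" "s = i' # a # w" "4 * i' + a + 1 \<le> q" "q < 4 * i' + 4" "a < 3"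
     | (g) i' j' x y where "s = i' # j' # x" "u = i' # j' # y" "q = 4 * i' + j' + 1" "i' < 3" "j' < 3"
    by blast
  then show ?thesis
  proof cases
    case 1 then show ?thesis by blast
  next
    case f
    have "i' < 3" using s f Tv_fst by blast
    then have False using f(3-6) nc by presburger
    then show ?thesis by blast
  next
    case e
    have "i' < 3" using u e Tv_fst by blast
    then have False using e(3-5) nc by presburger
    then show ?thesis by blast
  next
    case g
    then have False using nc by presburger
    then show ?thesis by blast
  qed
qed

definition ubP :: "(nat list \<Rightarrow> nat list \<Rightarrow> bool) \<Rightarrow> nat \<Rightarrow> nat \<Rightarrow> bool" where
  "ubP A k w \<longleftrightarrow> (\<forall>t M. IM (Tv (2 * k)) A (Lc (tau k) (Tv (2 * k)) t) (Rc (tau k) (Tv (2 * k)) t) M \<longrightarrow> card M \<le> w)"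

lemma ub0: assumes "symr A" shows "ubP A 0 w"
  unfolding ubP_def
proof (intro allI impI)
  fix t M assume im: "IM (Tv (2 * 0)) A (Lc (tau 0) (Tv (2 * 0)) t) (Rc (tau 0) (Tv (2 * 0)) t) M"
  have "M = {}"
  proof (rule ccontr)
    assume "M \<noteq> {}"
    then obtain e where "e \<in> M" by blast
    then obtain s u where su: "s \<in> Lc (tau 0) (Tv (2 * 0)) t" "u \<in> Rc (tau 0) (Tv (2 * 0)) t"
      using IM_cutE[OF assms LR_basic im] by metis
    then show False unfolding Lc_def Rc_def by simp
  qed
  then show "card M \<le> w" by simp
qed

lemma count2:
  assumes "finite M" "\<And>e. e \<in> M \<Longrightarrow> P e \<or> Q e"
  shows "card M \<le> card {e \<in> M. P e} + card {e \<in> M. Q e}"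
proof -
  have "M = {e \<in> M. P e} \<union> {e \<in> M. Q e}" using assms(2) by blast
  then have "card M = card ({e \<in> M. P e} \<union> {e \<in> M. Q e})" by simp
  also have "\<dots> \<le> card {e \<in> M. P e} + card {e \<in> M. Q e}" by (rule card_Un_le)
  finally show ?thesis .
qed

lemma count3:
  assumes "finite M" "\<And>e. e \<in> M \<Longrightarrow> P e \<or> Q e \<or> R e"
  shows "card M \<le> card {e \<in> M. P e} + card {e \<in> M. Q e} + card {e \<in> M. R e}"
proof -
  have "M = {e \<in> M. P e} \<union> {e \<in> M. Q e} \<union> {e \<in> M. R e}" using assms(2) by blast
  then have "card M = card ({e \<in> M. P e} \<union> {e \<in> M. Q e} \<union> {e \<in> M. R e})" by simp
  also have "\<dots> \<le> card ({e \<in> M. P e} \<union> {e \<in> M. Q e}) + card {e \<in> M. R e}" by (rule card_Un_le)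
  also have "card ({e \<in> M. P e} \<union> {e \<in> M. Q e}) \<le> card {e \<in> M. P e} + card {e \<in> M. Q e}" by (rule card_Un_le)
  finally show ?thesis by simp
qed

lemma copy_side:
  assumes "x \<in> Tv (2 * k)" "t div 16 ^ k = 4 * i + j + 1" "i < 3" "j < 3"
  shows "tau (Suc k) (i # j # x) \<le> t \<longleftrightarrow> tau k x \<le> t mod 16 ^ k"
proof -
  have "i # j # x \<in> Tv (2 * Suc k)" using assms Tv_Suc2 by simp
  then have "tau (Suc k) (i # j # x) \<le> t \<longleftrightarrow> Lside k (t div 16 ^ k) (t mod 16 ^ k) (i # j # x)"
    by (rule side_Suc)
  also have "\<dots> \<longleftrightarrow> tau k x \<le> t mod 16 ^ k" unfolding Lside_two using assms(2) by simp
  finally show ?thesis .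
qed

lemma copy_part:
  assumes sy: "symr A" and cons: "\<And>c x y. A (c # x) (c # y) = A x y" and ij: "i < 3" "j < 3"
    and q: "t div 16 ^ k = 4 * i + j + 1"
    and IH: "\<And>M'. IM (Tv (2 * k)) A (Lc (tau k) (Tv (2 * k)) (t mod 16 ^ k)) (Rc (tau k) (Tv (2 * k)) (t mod 16 ^ k)) M' \<Longrightarrow> card M' \<le> w"
    and im: "IM (Tv (2 * Suc k)) A (Lc (tau (Suc k)) (Tv (2 * Suc k)) t) (Rc (tau (Suc k)) (Tv (2 * Suc k)) t) M"
  shows "card {e \<in> M. e \<subseteq> (\<lambda>x. i # j # x) ` Tv (2 * k)} \<le> w"
proof -
  let ?f = "\<lambda>x. i # j # x"
  let ?V = "Tv (2 * Suc k)" and ?V' = "Tv (2 * k)" and ?r = "t mod 16 ^ k"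
  have im': "IM ?V A (Lc (tau (Suc k)) ?V t) (Rc (tau (Suc k)) ?V t) {e \<in> M. e \<subseteq> ?f ` ?V'}"
    using im by (rule IM_subset) blast
  have inV: "\<And>x. x \<in> ?V' \<Longrightarrow> ?f x \<in> ?V" using ij Tv_Suc2 by simp
  have cs: "\<And>x. x \<in> ?V' \<Longrightarrow> tau (Suc k) (?f x) \<le> t \<longleftrightarrow> tau k x \<le> ?r"
    using copy_side[OF _ q ij] by blast
  have "\<exists>M'. IM ?V' A (Lc (tau k) ?V' ?r) (Rc (tau k) ?V' ?r) M' \<and> card M' = card {e \<in> M. e \<subseteq> ?f ` ?V'}"
  proof (rule IM_pull[OF sy LR_basic sy LR_basic _ _ _ _ _ _ im'])
    show "inj_on ?f ?V'" by (rule inj_onI) simp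
    show "\<And>x y. x \<in> ?V' \<Longrightarrow> y \<in> ?V' \<Longrightarrow> A x y = A (?f x) (?f y)" using cons by simp
    show "?f ` Lc (tau k) ?V' ?r \<subseteq> Lc (tau (Suc k)) ?V t" unfolding Lc_def using inV cs by auto
    show "?f ` Rc (tau k) ?V' ?r \<subseteq> Rc (tau (Suc k)) ?V t" unfolding Rc_def using inV cs by auto
    show "\<And>x. x \<in> ?V' \<Longrightarrow> ?f x \<in> Lc (tau (Suc k)) ?V t \<Longrightarrow> x \<in> Lc (tau k) ?V' ?r"
      unfolding Lc_def using cs by auto
    show "\<And>x. x \<in> ?V' \<Longrightarrow> ?f x \<in> Rc (tau (Suc k)) ?V t \<Longrightarrow> x \<in> Rc (tau k) ?V' ?r"
      unfolding Rc_def using cs by auto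
    show "\<And>e. e \<in> {e \<in> M. e \<subseteq> ?f ` ?V'} \<Longrightarrow> e \<subseteq> ?f ` ?V'" by blast
  qed
  then obtain M' where "IM ?V' A (Lc (tau k) ?V' ?r) (Rc (tau k) ?V' ?r) M'"
      "card M' = card {e \<in> M. e \<subseteq> ?f ` ?V'}" by blast
  then show ?thesis using IH[of M'] by simp
qed

lemma side_L:
  assumes "w \<in> Lc (tau (Suc k)) (Tv (2 * Suc k)) t"
  shows "w \<in> Tv (2 * Suc k) \<and> Lside k (t div 16 ^ k) (t mod 16 ^ k) w"
  using assms side_Suc unfolding Lc_def by blast

lemma side_R:
  assumes "w \<in> Rc (tau (Suc k)) (Tv (2 * Suc k)) t"
  shows "w \<in> Tv (2 * Suc k) \<and> \<not> Lside k (t div 16 ^ k) (t mod 16 ^ k) w"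
  using assms side_Suc unfolding Rc_def by blast

lemma in_copy:
  assumes "s = i # j # x" "u = i # j # y" "s \<in> Tv (2 * Suc k)" "u \<in> Tv (2 * Suc k)"
  shows "{s, u} \<subseteq> (\<lambda>x. i # j # x) ` Tv (2 * k)"
  using assms Tv_Suc2 by auto

lemma tadj_len: "tadj s u \<Longrightarrow> length s \<noteq> length u"
  unfolding tadj_def by auto

lemma ub_tree_step:
  assumes IH: "ubP tadj k k"
  shows "ubP tadj (Suc k) (Suc k)"
  unfolding ubP_def
proof (intro allI impI)
  fix t M
  let ?V = "Tv (2 * Suc k)"
  let ?L = "Lc (tau (Suc k)) ?V t" and ?R = "Rc (tau (Suc k)) ?V t"
  let ?q = "t div 16 ^ k" and ?r = "t mod 16 ^ k"
  assume im: "IM ?V tadj ?L ?R M"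
  have fin: "finite M" using IM_finite[OF finite_Tv im] .
  note basic = symr_tadj LR_basic[of "tau (Suc k)" ?V t]
  show "card M \<le> Suc k"
  proof (cases "?q mod 4 = 0 \<or> 12 \<le> ?q")
    case True
    have "M \<subseteq> {e \<in> M. \<exists>s u. s \<in> ?L \<and> u \<in> ?R \<and> s = [] \<and> e = {s, u}}"
    proof
      fix e assume e: "e \<in> M"
      obtain s u where su: "s \<in> ?L" "u \<in> ?R" "tadj s u" "e = {s, u}" using IM_cutE[OF basic im e] by metis
      have sL: "s \<in> ?V" "Lside k ?q ?r s" using side_L[OF su(1)] by blast+
      have uR: "u \<in> ?V" "\<not> Lside k ?q ?r u" using side_R[OF su(2)] by blast+
      have "s = [] \<or> (length s = 1 \<and> length u = 1)"
        by (rule CL_bnd[OF sL(1) uR(1) sL(2) uR(2) tadj_sq[OF su(3)] True])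
      then have "s = []" using tadj_len[OF su(3)] by auto
      then show "e \<in> {e \<in> M. \<exists>s u. s \<in> ?L \<and> u \<in> ?R \<and> s = [] \<and> e = {s, u}}" using e su by blast
    qed
    moreover have "card {e \<in> M. \<exists>s u. s \<in> ?L \<and> u \<in> ?R \<and> s = [] \<and> e = {s, u}} \<le> 1"
      by (rule IM_class[OF basic im]) auto
    moreover have "finite {e \<in> M. \<exists>s u. s \<in> ?L \<and> u \<in> ?R \<and> s = [] \<and> e = {s, u}}" using fin by simp
    ultimately have "card M \<le> 1" using card_mono[of "{e \<in> M. \<exists>s u. s \<in> ?L \<and> u \<in> ?R \<and> s = [] \<and> e = {s, u}}" M]
      by linarith
    then show ?thesis by simp
  next
    case False
    define i where "i = ?q div 4"
    define j where "j = ?q mod 4 - 1"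
    have ar: "\<forall>q::nat. \<not> (q mod 4 = 0 \<or> 12 \<le> q) \<longrightarrow> q div 4 < 3 \<and> q mod 4 - 1 < 3 \<and> q = 4 * (q div 4) + (q mod 4 - 1) + 1"
      by presburger
    have ij: "i < 3" "j < 3" "?q = 4 * i + j + 1" using ar False unfolding i_def j_def by blast+
    have c1: "card {e \<in> M. e \<subseteq> (\<lambda>x. i # j # x) ` Tv (2 * k)} \<le> k"
      by (rule copy_part[OF symr_tadj tadj_Cons ij _ im]) (use IH in \<open>auto simp: ubP_def\<close>)
    have c2: "card {e \<in> M. \<exists>s u. s \<in> ?L \<and> u \<in> ?R \<and> (s = [] \<or> u = [i]) \<and> e = {s, u}} \<le> 1"
    proof (rule IM_class[OF basic im])
      fix s1 t1 s2 t2 :: "nat list"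
      assume "s1 \<in> ?L" "s2 \<in> ?L" "t1 \<in> ?R" "t2 \<in> ?R" "tadj s1 t1" "tadj s2 t2"
        "s1 = [] \<or> t1 = [i]" "s2 = [] \<or> t2 = [i]"
      moreover have "tadj [] [i]" unfolding tadj_def by simp
      ultimately show "s1 = s2 \<or> t1 = t2 \<or> tadj s1 t2 \<or> tadj s2 t1" by blast
    qed
    have "card M \<le> card {e \<in> M. e \<subseteq> (\<lambda>x. i # j # x) ` Tv (2 * k)}
         + card {e \<in> M. \<exists>s u. s \<in> ?L \<and> u \<in> ?R \<and> (s = [] \<or> u = [i]) \<and> e = {s, u}}"
    proof (rule count2[OF fin])
      fix e assume e: "e \<in> M"
      obtain s u where su: "s \<in> ?L" "u \<in> ?R" "tadj s u" "e = {s, u}" using IM_cutE[OF basic im e] by metis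
      have sV: "s \<in> ?V" "u \<in> ?V" using side_L[OF su(1)] side_R[OF su(2)] by simp_all
      show "e \<subseteq> (\<lambda>x. i # j # x) ` Tv (2 * k) \<or> (\<exists>s u. s \<in> ?L \<and> u \<in> ?R \<and> (s = [] \<or> u = [i]) \<and> e = {s, u})"
      proof (cases "\<exists>x y. s = i # j # x \<and> u = i # j # y")
        case True
        then obtain x y where xy: "s = i # j # x" "u = i # j # y" by blast
        have "{s, u} \<subseteq> (\<lambda>x. i # j # x) ` Tv (2 * k)" by (rule in_copy[OF xy sV])
        then show ?thesis using su(4) by blast
      next
        case nin: False
        have sL: "s \<in> ?V" "Lside k ?q ?r s" using side_L[OF su(1)] by blast+
        have uR: "u \<in> ?V" "\<not> Lside k ?q ?r u" using side_R[OF su(2)] by blast+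
        have "(s = [] \<or> u = [i] \<or> (length s = 1 \<and> length u = 1)) \<or>
           (length s = 2 \<and> length u = 2 \<and> hd s = i \<and> hd u = i)"
          by (rule CL_copy[OF sL(1) uR(1) sL(2) uR(2) tadj_sq[OF su(3)] ij nin])
        then have "s = [] \<or> u = [i]" using tadj_len[OF su(3)] by auto
        then show ?thesis using su by blast
      qed
    qed
    then show ?thesis using c1 c2 by simp
  qed
qed

lemma sq_nil: "length y = 1 \<Longrightarrow> sqadj [] y"
  unfolding sqadj_def by (cases y) auto

lemma sq_11: "length x = 1 \<Longrightarrow> length y = 1 \<Longrightarrow> x \<noteq> y \<Longrightarrow> sqadj x y"
  unfolding sqadj_def by (cases x; cases y) auto

lemma sq_22:
  assumes "length x = 2" "length y = 2" "hd x = hd y" "x \<noteq> y"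
  shows "sqadj x y"
proof -
  obtain a b where x: "x = [a, b]" using assms(1)
    by (metis One_nat_def Suc_1 length_0_conv length_Suc_conv)
  obtain c d where y: "y = [c, d]" using assms(2)
    by (metis One_nat_def Suc_1 length_0_conv length_Suc_conv)
  have "a = c" using assms(3) x y by simp
  then have "x = [a] @ [b] \<and> y = [a] @ [d]" using x y by simp
  then show ?thesis unfolding sqadj_def using assms(4) by blast
qed

lemma K1_bridge:
  assumes "s1 \<noteq> t2" "s2 \<noteq> t1"
    and "s1 = [] \<or> t1 = [i] \<or> (length s1 = 1 \<and> length t1 = 1)"
    and "s2 = [] \<or> t2 = [i] \<or> (length s2 = 1 \<and> length t2 = 1)"
  shows "s1 = s2 \<or> t1 = t2 \<or> sqadj s1 t2 \<or> sqadj s2 t1"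
  using assms(3)
proof (elim disjE)
  assume s1: "s1 = []"
  show ?thesis using assms(4)
  proof (elim disjE)
    assume "s2 = []" then show ?thesis using s1 by simp
  next
    assume "t2 = [i]" then show ?thesis using s1 sq_nil by simp
  next
    assume "length s2 = 1 \<and> length t2 = 1" then show ?thesis using s1 sq_nil by simp
  qed
next
  assume t1: "t1 = [i]"
  show ?thesis using assms(4)
  proof (elim disjE)
    assume "s2 = []" then show ?thesis using t1 sq_nil by simp
  next
    assume "t2 = [i]" then show ?thesis using t1 by simp
  next
    assume "length s2 = 1 \<and> length t2 = 1" then show ?thesis using t1 sq_11 assms(2) by simp
  qed
next
  assume l1: "length s1 = 1 \<and> length t1 = 1"
  show ?thesis using assms(4)
  proof (elim disjE)
    assume "s2 = []" then show ?thesis using l1 sq_nil by simp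
  next
    assume "t2 = [i]" then show ?thesis using l1 sq_11 assms(1) by simp
  next
    assume "length s2 = 1 \<and> length t2 = 1" then show ?thesis using l1 sq_11 assms(1) by simp
  qed
qed

lemma ub_sq_step:
  assumes IH: "ubP sqadj k (2 * k)"
  shows "ubP sqadj (Suc k) (2 * Suc k)"
  unfolding ubP_def
proof (intro allI impI)
  fix t M
  let ?V = "Tv (2 * Suc k)"
  let ?L = "Lc (tau (Suc k)) ?V t" and ?R = "Rc (tau (Suc k)) ?V t"
  let ?q = "t div 16 ^ k" and ?r = "t mod 16 ^ k"
  assume im: "IM ?V sqadj ?L ?R M"
  have fin: "finite M" using IM_finite[OF finite_Tv im] .
  note basic = symr_sqadj LR_basic[of "tau (Suc k)" ?V t]
  have disj: "\<And>a b. a \<in> ?L \<Longrightarrow> b \<in> ?R \<Longrightarrow> a \<noteq> b" unfolding Lc_def Rc_def by auto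
  show "card M \<le> 2 * Suc k"
  proof (cases "?q mod 4 = 0 \<or> 12 \<le> ?q")
    case True
    have "M \<subseteq> {e \<in> M. \<exists>s u. s \<in> ?L \<and> u \<in> ?R \<and> (s = [] \<or> (length s = 1 \<and> length u = 1)) \<and> e = {s, u}}"
    proof
      fix e assume e: "e \<in> M"
      obtain s u where su: "s \<in> ?L" "u \<in> ?R" "sqadj s u" "e = {s, u}" using IM_cutE[OF basic im e] by metis
      have sL: "s \<in> ?V" "Lside k ?q ?r s" using side_L[OF su(1)] by blast+
      have uR: "u \<in> ?V" "\<not> Lside k ?q ?r u" using side_R[OF su(2)] by blast+
      have "s = [] \<or> (length s = 1 \<and> length u = 1)"
        by (rule CL_bnd[OF sL(1) uR(1) sL(2) uR(2) su(3) True])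
      then show "e \<in> {e \<in> M. \<exists>s u. s \<in> ?L \<and> u \<in> ?R \<and> (s = [] \<or> (length s = 1 \<and> length u = 1)) \<and> e = {s, u}}"
        using e su by blast
    qed
    moreover have "card {e \<in> M. \<exists>s u. s \<in> ?L \<and> u \<in> ?R \<and> (s = [] \<or> (length s = 1 \<and> length u = 1)) \<and> e = {s, u}} \<le> 1"
    proof (rule IM_class[OF basic im])
      fix s1 t1 s2 t2 :: "nat list"
      assume h: "s1 \<in> ?L" "s2 \<in> ?L" "t1 \<in> ?R" "t2 \<in> ?R" "sqadj s1 t1" "sqadj s2 t2"
        "s1 = [] \<or> (length s1 = 1 \<and> length t1 = 1)" "s2 = [] \<or> (length s2 = 1 \<and> length t2 = 1)"
      have "s1 \<noteq> t2" "s2 \<noteq> t1" using disj h(1-4) by blast+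
      then show "s1 = s2 \<or> t1 = t2 \<or> sqadj s1 t2 \<or> sqadj s2 t1" using K1_bridge[of s1 t2 s2 t1 0] h(7,8) by blast
    qed
    moreover have "finite {e \<in> M. \<exists>s u. s \<in> ?L \<and> u \<in> ?R \<and> (s = [] \<or> (length s = 1 \<and> length u = 1)) \<and> e = {s, u}}" using fin by simp
    ultimately have "card M \<le> 1"
      using card_mono[of "{e \<in> M. \<exists>s u. s \<in> ?L \<and> u \<in> ?R \<and> (s = [] \<or> (length s = 1 \<and> length u = 1)) \<and> e = {s, u}}" M]
      by linarith
    then show ?thesis by simp
  next
    case False
    define i where "i = ?q div 4"
    define j where "j = ?q mod 4 - 1"
    have ar: "\<forall>q::nat. \<not> (q mod 4 = 0 \<or> 12 \<le> q) \<longrightarrow> q div 4 < 3 \<and> q mod 4 - 1 < 3 \<and> q = 4 * (q div 4) + (q mod 4 - 1) + 1"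
      by presburger
    have ij: "i < 3" "j < 3" "?q = 4 * i + j + 1" using ar False unfolding i_def j_def by blast+
    have c1: "card {e \<in> M. e \<subseteq> (\<lambda>x. i # j # x) ` Tv (2 * k)} \<le> 2 * k"
      by (rule copy_part[OF symr_sqadj sqadj_Cons ij _ im]) (use IH in \<open>auto simp: ubP_def\<close>)
    have c2: "card {e \<in> M. \<exists>s u. s \<in> ?L \<and> u \<in> ?R \<and> (s = [] \<or> u = [i] \<or> (length s = 1 \<and> length u = 1)) \<and> e = {s, u}} \<le> 1"
    proof (rule IM_class[OF basic im])
      fix s1 t1 s2 t2 :: "nat list"
      assume h: "s1 \<in> ?L" "s2 \<in> ?L" "t1 \<in> ?R" "t2 \<in> ?R" "sqadj s1 t1" "sqadj s2 t2"
        "s1 = [] \<or> t1 = [i] \<or> (length s1 = 1 \<and> length t1 = 1)" "s2 = [] \<or> t2 = [i] \<or> (length s2 = 1 \<and> length t2 = 1)"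
      have "s1 \<noteq> t2" "s2 \<noteq> t1" using disj h(1-4) by blast+
      then show "s1 = s2 \<or> t1 = t2 \<or> sqadj s1 t2 \<or> sqadj s2 t1" using K1_bridge[of s1 t2 s2 t1 i] h(7,8) by blast
    qed
    have c3: "card {e \<in> M. \<exists>s u. s \<in> ?L \<and> u \<in> ?R \<and> (length s = 2 \<and> length u = 2 \<and> hd s = i \<and> hd u = i) \<and> e = {s, u}} \<le> 1"
    proof (rule IM_class[OF basic im])
      fix s1 t1 s2 t2 :: "nat list"
      assume h: "s1 \<in> ?L" "s2 \<in> ?L" "t1 \<in> ?R" "t2 \<in> ?R" "sqadj s1 t1" "sqadj s2 t2"
        "length s1 = 2 \<and> length t1 = 2 \<and> hd s1 = i \<and> hd t1 = i" "length s2 = 2 \<and> length t2 = 2 \<and> hd s2 = i \<and> hd t2 = i"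
      have "s1 \<noteq> t2" using disj h(1-4) by blast
      then have "sqadj s1 t2" using sq_22[of s1 t2] h(7,8) by simp
      then show "s1 = s2 \<or> t1 = t2 \<or> sqadj s1 t2 \<or> sqadj s2 t1" by blast
    qed
    have "card M \<le> card {e \<in> M. e \<subseteq> (\<lambda>x. i # j # x) ` Tv (2 * k)}
         + card {e \<in> M. \<exists>s u. s \<in> ?L \<and> u \<in> ?R \<and> (s = [] \<or> u = [i] \<or> (length s = 1 \<and> length u = 1)) \<and> e = {s, u}}
         + card {e \<in> M. \<exists>s u. s \<in> ?L \<and> u \<in> ?R \<and> (length s = 2 \<and> length u = 2 \<and> hd s = i \<and> hd u = i) \<and> e = {s, u}}"
    proof (rule count3[OF fin])
      fix e assume e: "e \<in> M"
      obtain s u where su: "s \<in> ?L" "u \<in> ?R" "sqadj s u" "e = {s, u}" using IM_cutE[OF basic im e] by metis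
      have sV: "s \<in> ?V" "u \<in> ?V" using side_L[OF su(1)] side_R[OF su(2)] by simp_all
      show "e \<subseteq> (\<lambda>x. i # j # x) ` Tv (2 * k) \<or>
        (\<exists>s u. s \<in> ?L \<and> u \<in> ?R \<and> (s = [] \<or> u = [i] \<or> (length s = 1 \<and> length u = 1)) \<and> e = {s, u}) \<or>
        (\<exists>s u. s \<in> ?L \<and> u \<in> ?R \<and> (length s = 2 \<and> length u = 2 \<and> hd s = i \<and> hd u = i) \<and> e = {s, u})"
      proof (cases "\<exists>x y. s = i # j # x \<and> u = i # j # y")
        case True
        then obtain x y where xy: "s = i # j # x" "u = i # j # y" by blast
        have "{s, u} \<subseteq> (\<lambda>x. i # j # x) ` Tv (2 * k)" by (rule in_copy[OF xy sV])
        then show ?thesis using su(4) by blast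
      next
        case nin: False
        have sL: "s \<in> ?V" "Lside k ?q ?r s" using side_L[OF su(1)] by blast+
        have uR: "u \<in> ?V" "\<not> Lside k ?q ?r u" using side_R[OF su(2)] by blast+
        have "(s = [] \<or> u = [i] \<or> (length s = 1 \<and> length u = 1)) \<or>
           (length s = 2 \<and> length u = 2 \<and> hd s = i \<and> hd u = i)"
          by (rule CL_copy[OF sL(1) uR(1) sL(2) uR(2) su(3) ij nin])
        then show ?thesis using su by blast
      qed
    qed
    then show ?thesis using c1 c2 c3 by simp
  qed
qed

definition lbP :: "nat list set \<Rightarrow> (nat list \<Rightarrow> nat list \<Rightarrow> bool) \<Rightarrow> nat \<Rightarrow> bool" where
  "lbP V A w \<longleftrightarrow> (\<forall>\<sigma>. inj_on \<sigma> V \<longrightarrow> (\<exists>t M. IM V A (Lc \<sigma> V t) (Rc \<sigma> V t) M \<and> w \<le> card M))"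

lemma ex_min:
  fixes \<sigma> :: "'a \<Rightarrow> nat"
  assumes "finite X" "X \<noteq> {}"
  shows "\<exists>a\<in>X. \<forall>x\<in>X. \<sigma> a \<le> \<sigma> x"
proof -
  have "Min (\<sigma> ` X) \<in> \<sigma> ` X" using assms by simp
  then obtain a where a: "a \<in> X" "\<sigma> a = Min (\<sigma> ` X)" by auto
  have "\<forall>x\<in>X. \<sigma> a \<le> \<sigma> x" using a assms(1) by (simp add: Min_le)
  then show ?thesis using a(1) by blast
qed

lemma ex_max:
  fixes \<sigma> :: "'a \<Rightarrow> nat"
  assumes "finite X" "X \<noteq> {}"
  shows "\<exists>a\<in>X. \<forall>x\<in>X. \<sigma> x \<le> \<sigma> a"
proof -
  have "Max (\<sigma> ` X) \<in> \<sigma> ` X" using assms by simp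
  then obtain a where a: "a \<in> X" "\<sigma> a = Max (\<sigma> ` X)" by auto
  have "\<forall>x\<in>X. \<sigma> x \<le> \<sigma> a" using a assms(1) by (simp add: Max_ge)
  then show ?thesis using a(1) by blast
qed

lemma path_cross:
  fixes \<sigma> :: "nat list \<Rightarrow> nat"
  assumes "(\<sigma> \<rho> \<le> t) \<noteq> (\<sigma> (\<rho> @ u) \<le> t)"
  shows "\<exists>w c z. u = w @ [c] @ z \<and> (\<sigma> (\<rho> @ w) \<le> t) \<noteq> (\<sigma> (\<rho> @ w @ [c]) \<le> t)"
  using assms
proof (induction u rule: rev_induct)
  case Nil then show ?case by simp
next
  case (snoc c u')
  show ?case
  proof (cases "(\<sigma> (\<rho> @ u') \<le> t) = (\<sigma> \<rho> \<le> t)")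
    case True
    then have "(\<sigma> (\<rho> @ u') \<le> t) \<noteq> (\<sigma> (\<rho> @ u' @ [c]) \<le> t)" using snoc.prems by simp
    then show ?thesis by fastforce
  next
    case False
    then obtain w c' z where "u' = w @ [c'] @ z" "(\<sigma> (\<rho> @ w) \<le> t) \<noteq> (\<sigma> (\<rho> @ w @ [c']) \<le> t)"
      using snoc.IH by metis
    then show ?thesis by (intro exI[of _ w] exI[of _ c'] exI[of _ "z @ [c]"]) simp
  qed
qed

lemma orient:
  fixes \<sigma> :: "nat list \<Rightarrow> nat"
  assumes "(\<sigma> p \<le> t) \<noteq> (\<sigma> p' \<le> t)" "sqadj p p'"
  shows "\<exists>s u. \<sigma> s \<le> t \<and> \<not> \<sigma> u \<le> t \<and> sqadj s u \<and> {s, u} = {p, p'}"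
proof (cases "\<sigma> p \<le> t")
  case True then show ?thesis using assms by blast
next
  case False
  have "sqadj p' p" using assms(2) symr_sqadj unfolding symr_def by blast
  then show ?thesis using assms False by (intro exI[of _ p'] exI[of _ p]) (auto simp: insert_commute)
qed

lemma root_cross:
  fixes \<sigma> :: "nat list \<Rightarrow> nat"
  assumes "(\<sigma> \<rho> \<le> t) \<noteq> (\<sigma> (\<rho> @ u) \<le> t)"
  shows "\<exists>s x. \<sigma> s \<le> t \<and> \<not> \<sigma> x \<le> t \<and> sqadj s x \<and> tadj s x \<and>
     (\<exists>w1 w2. s = \<rho> @ w1 \<and> x = \<rho> @ w2 \<and> (\<exists>z1. u = w1 @ z1) \<and> (\<exists>z2. u = w2 @ z2))"
proof -
  obtain w c z where wcz: "u = w @ [c] @ z" "(\<sigma> (\<rho> @ w) \<le> t) \<noteq> (\<sigma> (\<rho> @ w @ [c]) \<le> t)"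
    using path_cross[OF assms] by blast
  have ta: "tadj (\<rho> @ w) (\<rho> @ w @ [c])" unfolding tadj_def by simp
  show ?thesis
  proof (cases "\<sigma> (\<rho> @ w) \<le> t")
    case True
    then show ?thesis using wcz ta tadj_sq[OF ta]
      by (intro exI[of _ "\<rho> @ w"] exI[of _ "\<rho> @ w @ [c]"]) auto
  next
    case False
    have ta': "tadj (\<rho> @ w @ [c]) (\<rho> @ w)" using ta unfolding tadj_def by simp
    show ?thesis using wcz ta' tadj_sq[OF ta'] False
      by (intro exI[of _ "\<rho> @ w @ [c]"] exI[of _ "\<rho> @ w"]) auto
  qed
qed

lemma sq_forms: "sqadj x y \<Longrightarrow> (\<exists>w. y = x @ w) \<or> (\<exists>w. x = y @ w) \<or> (\<exists>p a b. x = p @ [a] \<and> y = p @ [b])"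
  unfolding sqadj_def by blast

lemma sep3:
  assumes "x \<noteq> []" "hd x \<noteq> i" "y = i # c # w"
  shows "x \<noteq> y \<and> \<not> sqadj x y"
proof
  show "x \<noteq> y" using assms by auto
  show "\<not> sqadj x y"
  proof
    assume "sqadj x y"
    from sq_forms[OF this] show False
    proof (elim disjE exE conjE)
      fix v assume "y = x @ v" then show False using assms by (cases x) auto
    next
      fix v assume "x = y @ v" then show False using assms by auto
    next
      fix p a b assume "x = p @ [a]" "y = p @ [b]"
      then show False using assms by (cases p) auto
    qed
  qed
qed

lemma sep2:
  assumes "c \<noteq> j" "x \<noteq> []"
  shows "i # c # w \<noteq> i # j # x \<and> \<not> sqadj (i # c # w) (i # j # x)"
proof
  show "i # c # w \<noteq> i # j # x" using assms by auto
  show "\<not> sqadj (i # c # w) (i # j # x)"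
  proof
    assume "sqadj (i # c # w) (i # j # x)"
    from sq_forms[OF this] show False
    proof (elim disjE exE conjE)
      fix v assume "i # j # x = (i # c # w) @ v" then show False using assms by auto
    next
      fix v assume "i # c # w = (i # j # x) @ v" then show False using assms by auto
    next
      fix p a b assume h: "i # c # w = p @ [a]" "i # j # x = p @ [b]"
      show False
      proof (cases p)
        case Nil then show False using h by simp
      next
        case (Cons p1 p')
        show False
        proof (cases p')
          case Nil then show False using h Cons assms by simp
        next
          case (Cons p2 p'')
          then show False using h \<open>p = p1 # p'\<close> assms by simp
        qed
      qed
    qed
  qed
qed

lemma sep_tree:
  assumes "x = [] \<or> (x \<noteq> [] \<and> hd x \<noteq> i)"
  shows "x \<noteq> i # j # y \<and> \<not> tadj x (i # j # y)"
  using assms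
proof
  assume "x = []" then show ?thesis unfolding tadj_def by auto
next
  assume "x \<noteq> [] \<and> hd x \<noteq> i"
  then show ?thesis using sep3[of x i "i # j # y" j y] tadj_sq by blast
qed

lemma IM_empty: "induced_matching H {}"
  unfolding induced_matching_def by simp

lemma hd_prefix: "target \<noteq> [] \<Longrightarrow> hd target \<noteq> i \<Longrightarrow> target = s @ z \<Longrightarrow> s = [] \<or> (s \<noteq> [] \<and> hd s \<noteq> i)"
  by (cases s) auto

lemma two_in_W: "[0] \<in> Tv (2 * Suc k) - {[]}" "[1] \<in> Tv (2 * Suc k) - {[]}"
  unfolding Tv_def by auto

lemma push_copy:
  assumes sy: "symr A" and cons: "\<And>c x y. A (c # x) (c # y) = A x y"
    and V'V: "(\<lambda>x. i # j # x) ` V' \<subseteq> V"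
    and im: "IM V' A (Lc (\<sigma> \<circ> (\<lambda>x. i # j # x)) V' t) (Rc (\<sigma> \<circ> (\<lambda>x. i # j # x)) V' t) M'"
  shows "IM V A (Lc \<sigma> V t) (Rc \<sigma> V t) ((`) (\<lambda>x. i # j # x) ` M') \<and> card ((`) (\<lambda>x. i # j # x) ` M') = card M'
     \<and> (\<forall>e\<in>(`) (\<lambda>x. i # j # x) ` M'. e \<subseteq> (\<lambda>x. i # j # x) ` V')"
proof -
  let ?f = "\<lambda>x. i # j # x"
  have 1: "IM V A (Lc \<sigma> V t) (Rc \<sigma> V t) ((`) ?f ` M') \<and> card ((`) ?f ` M') = card M'"
  proof (rule IM_push[OF sy LR_basic sy LR_basic _ _ _ _ im])
    show "inj_on ?f V'" by (rule inj_onI) simp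
    show "\<And>x y. x \<in> V' \<Longrightarrow> y \<in> V' \<Longrightarrow> A x y = A (?f x) (?f y)" using cons by simp
    show "?f ` Lc (\<sigma> \<circ> ?f) V' t \<subseteq> Lc \<sigma> V t" using V'V unfolding Lc_def by auto
    show "?f ` Rc (\<sigma> \<circ> ?f) V' t \<subseteq> Rc \<sigma> V t" using V'V unfolding Rc_def by auto
  qed
  have 2: "\<forall>e\<in>(`) ?f ` M'. e \<subseteq> ?f ` V'"
  proof
    fix e assume "e \<in> (`) ?f ` M'"
    then obtain e' where e': "e' \<in> M'" "e = ?f ` e'" by blast
    obtain s u where "s \<in> Lc (\<sigma> \<circ> ?f) V' t" "u \<in> Rc (\<sigma> \<circ> ?f) V' t" "e' = {s, u}"
      using IM_cutE[OF sy LR_basic im e'(1)] by metis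
    then have "e' \<subseteq> V'" unfolding Lc_def Rc_def by auto
    then show "e \<subseteq> ?f ` V'" using e'(2) by blast
  qed
  show ?thesis using 1 2 by blast
qed

lemma lb_tree_step:
  assumes IH: "lbP (Tv (2 * k)) tadj k"
  shows "lbP (Tv (2 * Suc k)) tadj (Suc k)"
  unfolding lbP_def
proof (intro allI impI)
  fix \<sigma> :: "nat list \<Rightarrow> nat"
  let ?V = "Tv (2 * Suc k)"
  let ?W = "?V - {[]}"
  assume inj: "inj_on \<sigma> ?V"
  have finW: "finite ?W" using finite_Tv by simp
  have neW: "?W \<noteq> {}" using two_in_W by blast
  obtain a where a: "a \<in> ?W" "\<forall>x\<in>?W. \<sigma> a \<le> \<sigma> x" using ex_min[OF finW neW] by blast
  obtain b where b: "b \<in> ?W" "\<forall>x\<in>?W. \<sigma> x \<le> \<sigma> b" using ex_max[OF finW neW] by blast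
  have "\<exists>i::nat. i < 3 \<and> i \<noteq> hd a \<and> i \<noteq> hd b" by presburger
  then obtain i :: nat where i: "i < 3" "i \<noteq> hd a" "i \<noteq> hd b" by blast
  let ?f = "\<lambda>x. i # 0 # x"
  have fV: "?f ` Tv (2 * k) \<subseteq> ?W" using i Tv_Suc2 by auto
  have key: "\<exists>t M0. IM ?V tadj (Lc \<sigma> ?V t) (Rc \<sigma> ?V t) M0 \<and> k \<le> card M0 \<and> (\<forall>e\<in>M0. e \<subseteq> ?f ` Tv (2 * k))
     \<and> \<sigma> a \<le> t \<and> \<not> \<sigma> b \<le> t"
  proof (cases "k = 0")
    case True
    have "\<sigma> a < \<sigma> b"
    proof (rule ccontr)
      assume "\<not> \<sigma> a < \<sigma> b"
      have w: "[0] \<in> ?W" "[1] \<in> ?W" using two_in_W[of k] by blast+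
      have "\<sigma> a \<le> \<sigma> [0]" "\<sigma> a \<le> \<sigma> [1]" "\<sigma> [0] \<le> \<sigma> b" "\<sigma> [1] \<le> \<sigma> b"
        using a(2) b(2) w by blast+
      then have "\<sigma> [0] = \<sigma> [1]" using \<open>\<not> \<sigma> a < \<sigma> b\<close> by linarith
      moreover have "[0] \<in> ?V" "[1] \<in> ?V" using w by blast+
      ultimately show False using inj unfolding inj_on_def by (metis list.inject zero_neq_one)
    qed
    moreover have "IM ?V tadj (Lc \<sigma> ?V (\<sigma> a)) (Rc \<sigma> ?V (\<sigma> a)) {}" by (rule IM_empty)
    ultimately show ?thesis using True by (intro exI[of _ "\<sigma> a"] exI[of _ "{}"]) auto
  next
    case False
    have injf: "inj_on (\<sigma> \<circ> ?f) (Tv (2 * k))"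
    proof (rule comp_inj_on)
      show "inj_on ?f (Tv (2 * k))" by (rule inj_onI) simp
      show "inj_on \<sigma> (?f ` Tv (2 * k))" using inj fV inj_on_subset by blast
    qed
    obtain t M' where tM: "IM (Tv (2 * k)) tadj (Lc (\<sigma> \<circ> ?f) (Tv (2 * k)) t) (Rc (\<sigma> \<circ> ?f) (Tv (2 * k)) t) M'"
      "k \<le> card M'" using IH injf unfolding lbP_def by blast
    have fV': "?f ` Tv (2 * k) \<subseteq> ?V" using fV by blast
    have P: "IM ?V tadj (Lc \<sigma> ?V t) (Rc \<sigma> ?V t) ((`) ?f ` M') \<and> card ((`) ?f ` M') = card M'
     \<and> (\<forall>e\<in>(`) ?f ` M'. e \<subseteq> ?f ` Tv (2 * k))"
      by (rule push_copy[OF symr_tadj tadj_Cons fV' tM(1)])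
    have Pim: "IM ?V tadj (Lc \<sigma> ?V t) (Rc \<sigma> ?V t) ((`) ?f ` M')" using P by (rule conjunct1)
    have Pc: "card ((`) ?f ` M') = card M'" using conjunct1[OF conjunct2[OF P]] .
    have Ps: "\<forall>e\<in>(`) ?f ` M'. e \<subseteq> ?f ` Tv (2 * k)" using conjunct2[OF conjunct2[OF P]] .
    have "(`) ?f ` M' \<noteq> {}"
    proof
      assume "(`) ?f ` M' = {}"
      then have "card M' = 0" using Pc by simp
      then show False using tM(2) False by simp
    qed
    then obtain e where e: "e \<in> (`) ?f ` M'" by blast
    obtain s u where su: "s \<in> Lc \<sigma> ?V t" "u \<in> Rc \<sigma> ?V t" "e = {s, u}"
      using IM_cutE[OF symr_tadj LR_basic Pim e] by metis
    have esub: "e \<subseteq> ?f ` Tv (2 * k)" using bspec[OF Ps e] .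
    have se: "s \<in> e" and ue: "u \<in> e" using su(3) by simp_all
    have sf: "s \<in> ?f ` Tv (2 * k)" using esub se by (rule subsetD)
    have uf: "u \<in> ?f ` Tv (2 * k)" using esub ue by (rule subsetD)
    have "s \<in> ?W" using fV sf by (rule subsetD)
    moreover have "u \<in> ?W" using fV uf by (rule subsetD)
    ultimately have "\<sigma> a \<le> \<sigma> s" "\<sigma> u \<le> \<sigma> b" using bspec[OF a(2)] bspec[OF b(2)] by simp_all
    moreover have "\<sigma> s \<le> t" "\<not> \<sigma> u \<le> t" using su(1,2) unfolding Lc_def Rc_def by simp_all
    ultimately have "\<sigma> a \<le> t" "\<not> \<sigma> b \<le> t" by linarith+
    then show ?thesis using Pim Pc Ps tM(2) by (intro exI[of _ t] exI[of _ "(`) ?f ` M'"]) simp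
  qed
  then obtain t M0 where tM: "IM ?V tadj (Lc \<sigma> ?V t) (Rc \<sigma> ?V t) M0" "k \<le> card M0"
    "\<forall>e\<in>M0. e \<subseteq> ?f ` Tv (2 * k)" "\<sigma> a \<le> t" "\<not> \<sigma> b \<le> t" by blast
  have "\<exists>s x. \<sigma> s \<le> t \<and> \<not> \<sigma> x \<le> t \<and> tadj s x \<and> s \<in> ?V \<and> x \<in> ?V \<and>
      (s = [] \<or> (s \<noteq> [] \<and> hd s \<noteq> i)) \<and> (x = [] \<or> (x \<noteq> [] \<and> hd x \<noteq> i))"
  proof (cases "\<sigma> [] \<le> t")
    case True
    then have "(\<sigma> [] \<le> t) \<noteq> (\<sigma> ([] @ b) \<le> t)" using tM(5) by simp
    from root_cross[OF this] obtain s x where sx0: "\<sigma> s \<le> t" "\<not> \<sigma> x \<le> t" "tadj s x"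
      "\<exists>w1 w2. s = [] @ w1 \<and> x = [] @ w2 \<and> (\<exists>z1. b = w1 @ z1) \<and> (\<exists>z2. b = w2 @ z2)" by blast
    from sx0(4) have "\<exists>z1. b = s @ z1" "\<exists>z2. b = x @ z2" by auto
    then obtain z1 z2 where "b = s @ z1" "b = x @ z2" by blast
    note sx = sx0(1-3) this
    have vV: "b \<in> ?V" "b \<noteq> []" using b(1) by simp_all
    have "s @ z1 \<in> ?V" "x @ z2 \<in> ?V" using vV(1) sx(4,5) by simp_all
    then have "s \<in> ?V" "x \<in> ?V" using Tv_prefix by blast+
    moreover have "s = [] \<or> (s \<noteq> [] \<and> hd s \<noteq> i)" by (rule hd_prefix[OF vV(2) _ sx(4)]) (use i in simp)
    moreover have "x = [] \<or> (x \<noteq> [] \<and> hd x \<noteq> i)" by (rule hd_prefix[OF vV(2) _ sx(5)]) (use i in simp)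
    ultimately show ?thesis using sx(1-3) by (intro exI[of _ s] exI[of _ x]) simp
  next
    case False
    then have "(\<sigma> [] \<le> t) \<noteq> (\<sigma> ([] @ a) \<le> t)" using tM(4) by simp
    from root_cross[OF this] obtain s x where sx0: "\<sigma> s \<le> t" "\<not> \<sigma> x \<le> t" "tadj s x"
      "\<exists>w1 w2. s = [] @ w1 \<and> x = [] @ w2 \<and> (\<exists>z1. a = w1 @ z1) \<and> (\<exists>z2. a = w2 @ z2)" by blast
    from sx0(4) have "\<exists>z1. a = s @ z1" "\<exists>z2. a = x @ z2" by auto
    then obtain z1 z2 where "a = s @ z1" "a = x @ z2" by blast
    note sx = sx0(1-3) this
    have vV: "a \<in> ?V" "a \<noteq> []" using a(1) by simp_all
    have "s @ z1 \<in> ?V" "x @ z2 \<in> ?V" using vV(1) sx(4,5) by simp_all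
    then have "s \<in> ?V" "x \<in> ?V" using Tv_prefix by blast+
    moreover have "s = [] \<or> (s \<noteq> [] \<and> hd s \<noteq> i)" by (rule hd_prefix[OF vV(2) _ sx(4)]) (use i in simp)
    moreover have "x = [] \<or> (x \<noteq> [] \<and> hd x \<noteq> i)" by (rule hd_prefix[OF vV(2) _ sx(5)]) (use i in simp)
    ultimately show ?thesis using sx(1-3) by (intro exI[of _ s] exI[of _ x]) simp
  qed
  then obtain s x where sx: "\<sigma> s \<le> t" "\<not> \<sigma> x \<le> t" "tadj s x" "s \<in> ?V" "x \<in> ?V"
      "s = [] \<or> (s \<noteq> [] \<and> hd s \<noteq> i)" "x = [] \<or> (x \<noteq> [] \<and> hd x \<noteq> i)" by blast
  have sL: "s \<in> Lc \<sigma> ?V t" and xR: "x \<in> Rc \<sigma> ?V t" using sx unfolding Lc_def Rc_def by auto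
  have ins: "IM ?V tadj (Lc \<sigma> ?V t) (Rc \<sigma> ?V t) (insert {s, x} M0) \<and> {s, x} \<notin> M0"
  proof (rule IM_insert[OF symr_tadj LR_basic tM(1) sL xR sx(3)])
    fix s' t' assume h: "{s', t'} \<in> M0" "s' \<in> Lc \<sigma> ?V t" "t' \<in> Rc \<sigma> ?V t"
    have sub: "{s', t'} \<subseteq> ?f ` Tv (2 * k)" using bspec[OF tM(3) h(1)] .
    have "s' \<in> ?f ` Tv (2 * k)" "t' \<in> ?f ` Tv (2 * k)" using sub by simp_all
    then obtain y1 y2 where y: "s' = i # 0 # y1" "t' = i # 0 # y2" by blast
    have 1: "s \<noteq> s' \<and> \<not> tadj s t'" using sep_tree[OF sx(6), of 0 y1] sep_tree[OF sx(6), of 0 y2] y by simp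
    have 2: "x \<noteq> t' \<and> \<not> tadj x s'" using sep_tree[OF sx(7), of 0 y1] sep_tree[OF sx(7), of 0 y2] y by simp
    have "\<not> tadj s' x" using 2 symr_tadj unfolding symr_def by blast
    then show "s \<noteq> s' \<and> x \<noteq> t' \<and> \<not> tadj s t' \<and> \<not> tadj s' x" using 1 2 by blast
  qed
  have "finite M0" using IM_finite[OF finite_Tv tM(1)] .
  then have "card (insert {s, x} M0) = Suc (card M0)" using ins by simp
  then have "Suc k \<le> card (insert {s, x} M0)" using tM(2) by simp
  then show "\<exists>t M. IM ?V tadj (Lc \<sigma> ?V t) (Rc \<sigma> ?V t) M \<and> Suc k \<le> card M" using ins by blast
qed

lemma sq_sym: "sqadj x y \<Longrightarrow> sqadj y x"
  using symr_sqadj unfolding symr_def by blast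

lemma two_root:
  fixes \<sigma> :: "nat list \<Rightarrow> nat"
  assumes rr: "\<rho>1 = \<rho>2 \<or> sqadj \<rho>1 \<rho>2" and L: "\<sigma> (\<rho>1 @ u1) \<le> t" and R: "\<not> \<sigma> (\<rho>2 @ u2) \<le> t"
  shows "\<exists>s x. \<sigma> s \<le> t \<and> \<not> \<sigma> x \<le> t \<and> sqadj s x \<and>
    (\<forall>v\<in>{s, x}. (\<exists>w z. v = \<rho>1 @ w \<and> \<rho>1 @ u1 = v @ z) \<or> (\<exists>w z. v = \<rho>2 @ w \<and> \<rho>2 @ u2 = v @ z))"
proof (cases "\<sigma> \<rho>1 \<le> t")
  case False
  then have "(\<sigma> \<rho>1 \<le> t) \<noteq> (\<sigma> (\<rho>1 @ u1) \<le> t)" using L by simp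
  from root_cross[OF this] obtain s x where sx: "\<sigma> s \<le> t" "\<not> \<sigma> x \<le> t" "sqadj s x"
    "\<exists>w1 w2. s = \<rho>1 @ w1 \<and> x = \<rho>1 @ w2 \<and> (\<exists>z1. u1 = w1 @ z1) \<and> (\<exists>z2. u1 = w2 @ z2)" by blast
  then obtain w1 w2 z1 z2 where "s = \<rho>1 @ w1" "x = \<rho>1 @ w2" "u1 = w1 @ z1" "u1 = w2 @ z2" by blast
  then have "s = \<rho>1 @ w1 \<and> \<rho>1 @ u1 = s @ z1" "x = \<rho>1 @ w2 \<and> \<rho>1 @ u1 = x @ z2" by simp_all
  then have "(\<exists>w z. s = \<rho>1 @ w \<and> \<rho>1 @ u1 = s @ z)" "(\<exists>w z. x = \<rho>1 @ w \<and> \<rho>1 @ u1 = x @ z)" by blast+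
  then show ?thesis using sx(1-3) by (intro exI[of _ s] exI[of _ x]) auto
next
  case T1: True
  show ?thesis
  proof (cases "\<sigma> \<rho>2 \<le> t")
    case True
    then have "(\<sigma> \<rho>2 \<le> t) \<noteq> (\<sigma> (\<rho>2 @ u2) \<le> t)" using R by simp
    from root_cross[OF this] obtain s x where sx: "\<sigma> s \<le> t" "\<not> \<sigma> x \<le> t" "sqadj s x"
      "\<exists>w1 w2. s = \<rho>2 @ w1 \<and> x = \<rho>2 @ w2 \<and> (\<exists>z1. u2 = w1 @ z1) \<and> (\<exists>z2. u2 = w2 @ z2)" by blast
    then obtain w1 w2 z1 z2 where "s = \<rho>2 @ w1" "x = \<rho>2 @ w2" "u2 = w1 @ z1" "u2 = w2 @ z2" by blast
    then have "s = \<rho>2 @ w1 \<and> \<rho>2 @ u2 = s @ z1" "x = \<rho>2 @ w2 \<and> \<rho>2 @ u2 = x @ z2" by simp_all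
  then have "(\<exists>w z. s = \<rho>2 @ w \<and> \<rho>2 @ u2 = s @ z)" "(\<exists>w z. x = \<rho>2 @ w \<and> \<rho>2 @ u2 = x @ z)" by blast+
    then show ?thesis using sx(1-3) by (intro exI[of _ s] exI[of _ x]) auto
  next
    case False
    then have "\<rho>1 \<noteq> \<rho>2" using T1 by auto
    then have "sqadj \<rho>1 \<rho>2" using rr by simp
    moreover have "(\<exists>w z. \<rho>1 = \<rho>1 @ w \<and> \<rho>1 @ u1 = \<rho>1 @ z)" "(\<exists>w z. \<rho>2 = \<rho>2 @ w \<and> \<rho>2 @ u2 = \<rho>2 @ z)" by auto
    ultimately show ?thesis using T1 False by (intro exI[of _ \<rho>1] exI[of _ \<rho>2]) auto
  qed
qed

lemma sepZ1Y:
  assumes "z \<noteq> []" "hd z \<noteq> i" "y = i # j # x"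
  shows "z \<noteq> y \<and> \<not> sqadj z y \<and> \<not> sqadj y z"
  using sep3[OF assms] sq_sym by blast

lemma sepZ2Y:
  assumes "z = i # c # w" "c \<noteq> j" "y = i # j # x" "x \<noteq> []"
  shows "z \<noteq> y \<and> \<not> sqadj z y \<and> \<not> sqadj y z"
  using sep2[OF assms(2,4), of i w] assms sq_sym by blast

lemma len2_split: "2 \<le> length w \<Longrightarrow> w = [hd w, w ! 1] @ drop 2 w"
  by (cases w; cases "tl w") auto

lemma lb_sq_step:
  assumes IH: "lbP (Tv (2 * k) - {[]}) sqadj (2 * k)"
  shows "lbP (Tv (2 * Suc k) - {[]}) sqadj (2 * Suc k)"
  unfolding lbP_def
proof (intro allI impI)
  fix \<sigma> :: "nat list \<Rightarrow> nat"
  let ?V = "Tv (2 * Suc k) - {[]}"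
  let ?V' = "Tv (2 * k) - {[]}"
  assume inj: "inj_on \<sigma> ?V"
  have finV: "finite ?V" using finite_Tv by simp
  have w01: "[0] \<in> ?V" "[1] \<in> ?V" using two_in_W by blast+
  then have neV: "?V \<noteq> {}" by blast
  obtain a where a: "a \<in> ?V" "\<forall>x\<in>?V. \<sigma> a \<le> \<sigma> x" using ex_min[OF finV neV] by blast
  obtain b where b: "b \<in> ?V" "\<forall>x\<in>?V. \<sigma> x \<le> \<sigma> b" using ex_max[OF finV neV] by blast
  have "\<exists>i::nat. i < 3 \<and> i \<noteq> hd a \<and> i \<noteq> hd b" by presburger
  then obtain i :: nat where i: "i < 3" "i \<noteq> hd a" "i \<noteq> hd b" by blast
  define D where "D = {w \<in> ?V. 2 \<le> length w \<and> hd w = i}"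
  have finD: "finite D" unfolding D_def using finV by simp
  have i01: "[i, 0] \<in> D" "[i, 1] \<in> D" unfolding D_def Tv_def using i(1) by auto
  then have neD: "D \<noteq> {}" by blast
  obtain a' where a': "a' \<in> D" "\<forall>x\<in>D. \<sigma> a' \<le> \<sigma> x" using ex_min[OF finD neD] by blast
  obtain b' where b': "b' \<in> D" "\<forall>x\<in>D. \<sigma> x \<le> \<sigma> b'" using ex_max[OF finD neD] by blast
  have DV: "D \<subseteq> ?V" unfolding D_def by blast
  have "\<exists>j::nat. j < 3 \<and> j \<noteq> a' ! 1 \<and> j \<noteq> b' ! 1" by presburger
  then obtain j :: nat where j: "j < 3" "j \<noteq> a' ! 1" "j \<noteq> b' ! 1" by blast
  let ?f = "\<lambda>x. i # j # x"
  have fD: "?f ` ?V' \<subseteq> D" unfolding D_def using i(1) j(1) Tv_Suc2 by auto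
  have fV: "?f ` ?V' \<subseteq> ?V" using fD DV by (rule subset_trans)
  have key: "\<exists>t M0. IM ?V sqadj (Lc \<sigma> ?V t) (Rc \<sigma> ?V t) M0 \<and> 2 * k \<le> card M0 \<and> (\<forall>e\<in>M0. e \<subseteq> ?f ` ?V')
     \<and> \<sigma> a \<le> t \<and> \<not> \<sigma> b \<le> t \<and> \<sigma> a' \<le> t \<and> \<not> \<sigma> b' \<le> t"
  proof (cases "k = 0")
    case True
    have "\<sigma> a' < \<sigma> b'"
    proof (rule ccontr)
      assume "\<not> \<sigma> a' < \<sigma> b'"
      have "\<sigma> a' \<le> \<sigma> [i, 0]" "\<sigma> a' \<le> \<sigma> [i, 1]" "\<sigma> [i, 0] \<le> \<sigma> b'" "\<sigma> [i, 1] \<le> \<sigma> b'"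
        using bspec[OF a'(2) i01(1)] bspec[OF a'(2) i01(2)] bspec[OF b'(2) i01(1)] bspec[OF b'(2) i01(2)] by simp_all
      then have "\<sigma> [i, 0] = \<sigma> [i, 1]" using \<open>\<not> \<sigma> a' < \<sigma> b'\<close> by linarith
      moreover have "[i, 0] \<in> ?V" "[i, 1] \<in> ?V" using i01 DV by blast+
      ultimately show False using inj unfolding inj_on_def by (metis list.inject zero_neq_one)
    qed
    moreover have "\<sigma> a \<le> \<sigma> a'" using bspec[OF a(2)] a'(1) DV by blast
    moreover have "\<sigma> b' \<le> \<sigma> b" using bspec[OF b(2)] b'(1) DV by blast
    moreover have "IM ?V sqadj (Lc \<sigma> ?V (\<sigma> a')) (Rc \<sigma> ?V (\<sigma> a')) {}" by (rule IM_empty)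
    ultimately show ?thesis using True by (intro exI[of _ "\<sigma> a'"] exI[of _ "{}"]) auto
  next
    case False
    have injf: "inj_on (\<sigma> \<circ> ?f) ?V'"
    proof (rule comp_inj_on)
      show "inj_on ?f ?V'" by (rule inj_onI) simp
      show "inj_on \<sigma> (?f ` ?V')" using inj fV by (rule inj_on_subset)
    qed
    obtain t M' where tM: "IM ?V' sqadj (Lc (\<sigma> \<circ> ?f) ?V' t) (Rc (\<sigma> \<circ> ?f) ?V' t) M'"
      "2 * k \<le> card M'" using IH injf unfolding lbP_def by blast
    have P: "IM ?V sqadj (Lc \<sigma> ?V t) (Rc \<sigma> ?V t) ((`) ?f ` M') \<and> card ((`) ?f ` M') = card M'
     \<and> (\<forall>e\<in>(`) ?f ` M'. e \<subseteq> ?f ` ?V')"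
      by (rule push_copy[OF symr_sqadj sqadj_Cons fV tM(1)])
    have Pim: "IM ?V sqadj (Lc \<sigma> ?V t) (Rc \<sigma> ?V t) ((`) ?f ` M')" using P by (rule conjunct1)
    have Pc: "card ((`) ?f ` M') = card M'" using conjunct1[OF conjunct2[OF P]] .
    have Ps: "\<forall>e\<in>(`) ?f ` M'. e \<subseteq> ?f ` ?V'" using conjunct2[OF conjunct2[OF P]] .
    have "(`) ?f ` M' \<noteq> {}"
    proof
      assume "(`) ?f ` M' = {}"
      then have "card M' = 0" using Pc by simp
      then show False using tM(2) False by simp
    qed
    then obtain e where e: "e \<in> (`) ?f ` M'" by blast
    obtain s u where su: "s \<in> Lc \<sigma> ?V t" "u \<in> Rc \<sigma> ?V t" "e = {s, u}"
      using IM_cutE[OF symr_sqadj LR_basic Pim e] by metis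
    have esub: "e \<subseteq> ?f ` ?V'" using bspec[OF Ps e] .
    have se: "s \<in> e" and ue: "u \<in> e" using su(3) by simp_all
    have sf: "s \<in> ?f ` ?V'" using esub se by (rule subsetD)
    have uf: "u \<in> ?f ` ?V'" using esub ue by (rule subsetD)
    have sD: "s \<in> D" using fD sf by (rule subsetD)
    have uD: "u \<in> D" using fD uf by (rule subsetD)
    have sV: "s \<in> ?V" using DV sD by (rule subsetD)
    have uV: "u \<in> ?V" using DV uD by (rule subsetD)
    have "\<sigma> a \<le> \<sigma> s" "\<sigma> u \<le> \<sigma> b" using bspec[OF a(2) sV] bspec[OF b(2) uV] by simp_all
    moreover have "\<sigma> a' \<le> \<sigma> s" "\<sigma> u \<le> \<sigma> b'" using bspec[OF a'(2) sD] bspec[OF b'(2) uD] by simp_all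
    moreover have "\<sigma> s \<le> t" "\<not> \<sigma> u \<le> t" using su(1,2) unfolding Lc_def Rc_def by simp_all
    ultimately have "\<sigma> a \<le> t" "\<not> \<sigma> b \<le> t" "\<sigma> a' \<le> t" "\<not> \<sigma> b' \<le> t" by linarith+
    then show ?thesis using Pim Pc Ps tM(2) by (intro exI[of _ t] exI[of _ "(`) ?f ` M'"]) simp
  qed
  then obtain t M0 where tM: "IM ?V sqadj (Lc \<sigma> ?V t) (Rc \<sigma> ?V t) M0" "2 * k \<le> card M0"
    "\<forall>e\<in>M0. e \<subseteq> ?f ` ?V'" "\<sigma> a \<le> t" "\<not> \<sigma> b \<le> t" "\<sigma> a' \<le> t" "\<not> \<sigma> b' \<le> t" by blast
  \<comment> \<open>first extra edge, in the other two branches\<close>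
  have aa: "a = [hd a] @ tl a" "b = [hd b] @ tl b" using a(1) b(1) by simp_all
  have rr1: "[hd a] = [hd b] \<or> sqadj [hd a] [hd b]" using sq_11[of "[hd a]" "[hd b]"] by auto
  have "\<sigma> ([hd a] @ tl a) \<le> t" "\<not> \<sigma> ([hd b] @ tl b) \<le> t" using tM(4,5) aa by simp_all
  from two_root[OF rr1 this] obtain s1 x1 where e1: "\<sigma> s1 \<le> t" "\<not> \<sigma> x1 \<le> t" "sqadj s1 x1"
    "\<forall>v\<in>{s1, x1}. (\<exists>w z. v = [hd a] @ w \<and> [hd a] @ tl a = v @ z) \<or> (\<exists>w z. v = [hd b] @ w \<and> [hd b] @ tl b = v @ z)"
    by blast
  have Z1: "\<And>v. v \<in> {s1, x1} \<Longrightarrow> v \<noteq> [] \<and> hd v \<noteq> i \<and> v \<in> ?V"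
  proof -
    fix v assume v: "v \<in> {s1, x1}"
    from bspec[OF e1(4) v] show "v \<noteq> [] \<and> hd v \<noteq> i \<and> v \<in> ?V"
    proof (elim disjE exE conjE)
      fix w z assume h: "v = [hd a] @ w" "[hd a] @ tl a = v @ z"
      have "v @ z \<in> Tv (2 * Suc k)" using h(2) aa(1) a(1) by simp
      then have "v \<in> Tv (2 * Suc k)" by (rule Tv_prefix)
      then show ?thesis using h(1) i(2) by simp
    next
      fix w z assume h: "v = [hd b] @ w" "[hd b] @ tl b = v @ z"
      have "v @ z \<in> Tv (2 * Suc k)" using h(2) aa(2) b(1) by simp
      then have "v \<in> Tv (2 * Suc k)" by (rule Tv_prefix)
      then show ?thesis using h(1) i(3) by simp
    qed
  qed
  \<comment> \<open>second extra edge, among the other two copies of branch i\<close>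
  have a'D: "2 \<le> length a'" "hd a' = i" "a' \<in> ?V" using a'(1) unfolding D_def by auto
  have b'D: "2 \<le> length b'" "hd b' = i" "b' \<in> ?V" using b'(1) unfolding D_def by auto
  have aa': "a' = [i, a' ! 1] @ drop 2 a'" using len2_split[OF a'D(1)] a'D(2) by simp
  have bb': "b' = [i, b' ! 1] @ drop 2 b'" using len2_split[OF b'D(1)] b'D(2) by simp
  have rr2: "[i, a' ! 1] = [i, b' ! 1] \<or> sqadj [i, a' ! 1] [i, b' ! 1]" using sq_22[of "[i, a' ! 1]" "[i, b' ! 1]"] by auto
  have "\<sigma> ([i, a' ! 1] @ drop 2 a') \<le> t" "\<not> \<sigma> ([i, b' ! 1] @ drop 2 b') \<le> t" using tM(6,7) aa' bb' by simp_all
  from two_root[OF rr2 this] obtain s2 x2 where e2: "\<sigma> s2 \<le> t" "\<not> \<sigma> x2 \<le> t" "sqadj s2 x2"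
    "\<forall>v\<in>{s2, x2}. (\<exists>w z. v = [i, a' ! 1] @ w \<and> [i, a' ! 1] @ drop 2 a' = v @ z) \<or>
        (\<exists>w z. v = [i, b' ! 1] @ w \<and> [i, b' ! 1] @ drop 2 b' = v @ z)"
    by blast
  have Z2: "\<And>v. v \<in> {s2, x2} \<Longrightarrow> (\<exists>c w. v = i # c # w \<and> c \<noteq> j) \<and> v \<in> ?V"
  proof -
    fix v assume v: "v \<in> {s2, x2}"
    from bspec[OF e2(4) v] show "(\<exists>c w. v = i # c # w \<and> c \<noteq> j) \<and> v \<in> ?V"
    proof (elim disjE exE conjE)
      fix w z assume h: "v = [i, a' ! 1] @ w" "[i, a' ! 1] @ drop 2 a' = v @ z"
      have "v @ z \<in> Tv (2 * Suc k)" using h(2) aa' a'D(3) by simp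
      then have "v \<in> Tv (2 * Suc k)" by (rule Tv_prefix)
      then show ?thesis using h(1) j(2) by auto
    next
      fix w z assume h: "v = [i, b' ! 1] @ w" "[i, b' ! 1] @ drop 2 b' = v @ z"
      have "v @ z \<in> Tv (2 * Suc k)" using h(2) bb' b'D(3) by simp
      then have "v \<in> Tv (2 * Suc k)" by (rule Tv_prefix)
      then show ?thesis using h(1) j(3) by auto
    qed
  qed
  have Y: "\<And>s' t'. {s', t'} \<in> M0 \<Longrightarrow> (\<exists>x. s' = i # j # x \<and> x \<noteq> []) \<and> (\<exists>x. t' = i # j # x \<and> x \<noteq> [])"
  proof -
    fix s' t' assume h: "{s', t'} \<in> M0"
    have sub: "{s', t'} \<subseteq> ?f ` ?V'" using bspec[OF tM(3) h] .
    have "s' \<in> ?f ` ?V'" "t' \<in> ?f ` ?V'" using sub by simp_all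
    then show "(\<exists>x. s' = i # j # x \<and> x \<noteq> []) \<and> (\<exists>x. t' = i # j # x \<and> x \<noteq> [])" by blast
  qed
  have s1L: "s1 \<in> Lc \<sigma> ?V t" and x1R: "x1 \<in> Rc \<sigma> ?V t" using e1(1,2) Z1[of s1] Z1[of x1] unfolding Lc_def Rc_def by auto
  have s2L: "s2 \<in> Lc \<sigma> ?V t" and x2R: "x2 \<in> Rc \<sigma> ?V t" using e2(1,2) Z2[of s2] Z2[of x2] unfolding Lc_def Rc_def by auto
  have ins1: "IM ?V sqadj (Lc \<sigma> ?V t) (Rc \<sigma> ?V t) (insert {s1, x1} M0) \<and> {s1, x1} \<notin> M0"
  proof (rule IM_insert[OF symr_sqadj LR_basic tM(1) s1L x1R e1(3)])
    fix s' t' assume h: "{s', t'} \<in> M0" "s' \<in> Lc \<sigma> ?V t" "t' \<in> Rc \<sigma> ?V t"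
    obtain y1 y2 where y: "s' = i # j # y1" "t' = i # j # y2" using Y[OF h(1)] by blast
    have zs: "s1 \<noteq> [] \<and> hd s1 \<noteq> i" "x1 \<noteq> [] \<and> hd x1 \<noteq> i" using Z1 by blast+
    have "s1 \<noteq> s' \<and> \<not> sqadj s1 t'" using sepZ1Y[of s1 i t' j y2] sepZ1Y[of s1 i s' j y1] zs y by blast
    moreover have "x1 \<noteq> t' \<and> \<not> sqadj s' x1" using sepZ1Y[of x1 i t' j y2] sepZ1Y[of x1 i s' j y1] zs y by blast
    ultimately show "s1 \<noteq> s' \<and> x1 \<noteq> t' \<and> \<not> sqadj s1 t' \<and> \<not> sqadj s' x1" by blast
  qed
  have ins2: "IM ?V sqadj (Lc \<sigma> ?V t) (Rc \<sigma> ?V t) (insert {s2, x2} (insert {s1, x1} M0)) \<and> {s2, x2} \<notin> insert {s1, x1} M0"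
  proof (rule IM_insert[OF symr_sqadj LR_basic conjunct1[OF ins1] s2L x2R e2(3)])
    fix s' t' assume h: "{s', t'} \<in> insert {s1, x1} M0" "s' \<in> Lc \<sigma> ?V t" "t' \<in> Rc \<sigma> ?V t"
    obtain c2 w2 where cs: "s2 = i # c2 # w2" "c2 \<noteq> j" using Z2[of s2] by blast
    obtain d2 v2 where cx: "x2 = i # d2 # v2" "d2 \<noteq> j" using Z2[of x2] by blast
    show "s2 \<noteq> s' \<and> x2 \<noteq> t' \<and> \<not> sqadj s2 t' \<and> \<not> sqadj s' x2"
    proof (cases "{s', t'} = {s1, x1}")
      case True
      then have "s' \<in> {s1, x1}" "t' \<in> {s1, x1}" by (simp_all add: doubleton_eq_iff) (metis insertI1 insert_commute)+
      then have zs: "s' \<noteq> [] \<and> hd s' \<noteq> i" "t' \<noteq> [] \<and> hd t' \<noteq> i" using Z1 by blast+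
      have "t' \<noteq> s2 \<and> \<not> sqadj t' s2 \<and> \<not> sqadj s2 t'" using sepZ1Y[of t' i s2 c2 w2] zs cs by blast
      moreover have "s' \<noteq> x2 \<and> \<not> sqadj s' x2 \<and> \<not> sqadj x2 s'" using sepZ1Y[of s' i x2 d2 v2] zs cx by blast
      moreover have "s' \<noteq> s2" using sepZ1Y[of s' i s2 c2 w2] zs cs by blast
      moreover have "t' \<noteq> x2" using sepZ1Y[of t' i x2 d2 v2] zs cx by blast
      ultimately show ?thesis by metis
    next
      case False
      then have hM: "{s', t'} \<in> M0" using h(1) by blast
      obtain y1 y2 where y: "s' = i # j # y1" "y1 \<noteq> []" "t' = i # j # y2" "y2 \<noteq> []" using Y[OF hM] by blast
      have "s2 \<noteq> s'" using sepZ2Y[OF cs(1) cs(2) y(1,2)] by blast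
      moreover have "\<not> sqadj s2 t'" using sepZ2Y[OF cs(1) cs(2) y(3,4)] by blast
      moreover have "x2 \<noteq> t'" using sepZ2Y[OF cx(1) cx(2) y(3,4)] by blast
      moreover have "\<not> sqadj s' x2" using sepZ2Y[OF cx(1) cx(2) y(1,2)] by blast
      ultimately show ?thesis by blast
    qed
  qed
  have "finite M0" using IM_finite[OF _ tM(1)] finV by blast
  then have "card (insert {s2, x2} (insert {s1, x1} M0)) = Suc (Suc (card M0))" using ins1 ins2 by simp
  then have "2 * Suc k \<le> card (insert {s2, x2} (insert {s1, x1} M0))" using tM(2) by simp
  then show "\<exists>t M. IM ?V sqadj (Lc \<sigma> ?V t) (Rc \<sigma> ?V t) M \<and> 2 * Suc k \<le> card M"
    using conjunct1[OF ins2] by blast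
qed

lemma ub_tree: "ubP tadj k k"
  by (induction k) (simp_all add: ub0[OF symr_tadj] ub_tree_step)

lemma ub_sq: "ubP sqadj k (2 * k)"
proof (induction k)
  case 0 show ?case using ub0[OF symr_sqadj] by simp
next
  case (Suc k) then show ?case by (rule ub_sq_step)
qed

lemma lb_zero: "lbP V A 0"
  unfolding lbP_def using IM_empty by (metis le0)

lemma lb_tree: "lbP (Tv (2 * k)) tadj k"
proof (induction k)
  case 0 show ?case using lb_zero[of "Tv (2 * 0)" tadj] by simp
next
  case (Suc k) then show ?case by (rule lb_tree_step)
qed

lemma lb_sqm: "lbP (Tv (2 * k) - {[]}) sqadj (2 * k)"
proof (induction k)
  case 0 show ?case using lb_zero[of "Tv (2 * 0) - {[]}" sqadj] by simp
next
  case (Suc k) then show ?case by (rule lb_sq_step)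
qed

lemma lb_sq: "lbP (Tv (2 * k)) sqadj (2 * k)"
  unfolding lbP_def
proof (intro allI impI)
  fix \<sigma> :: "nat list \<Rightarrow> nat"
  let ?V = "Tv (2 * k)" and ?V' = "Tv (2 * k) - {[]}"
  assume inj: "inj_on \<sigma> ?V"
  have inj': "inj_on \<sigma> ?V'" using inj by (rule inj_on_subset) blast
  obtain t M where tM: "IM ?V' sqadj (Lc \<sigma> ?V' t) (Rc \<sigma> ?V' t) M" "2 * k \<le> card M"
    using lb_sqm inj' unfolding lbP_def by blast
  have P: "IM ?V sqadj (Lc \<sigma> ?V t) (Rc \<sigma> ?V t) ((`) id ` M) \<and> card ((`) id ` M) = card M"
  proof (rule IM_push[OF symr_sqadj LR_basic symr_sqadj LR_basic _ _ _ _ tM(1)])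
    show "inj_on id ?V'" by simp
    show "\<And>x y. x \<in> ?V' \<Longrightarrow> y \<in> ?V' \<Longrightarrow> sqadj x y = sqadj (id x) (id y)" by simp
    show "id ` Lc \<sigma> ?V' t \<subseteq> Lc \<sigma> ?V t" unfolding Lc_def by auto
    show "id ` Rc \<sigma> ?V' t \<subseteq> Rc \<sigma> ?V t" unfolding Rc_def by auto
  qed
  then show "\<exists>t M. IM ?V sqadj (Lc \<sigma> ?V t) (Rc \<sigma> ?V t) M \<and> 2 * k \<le> card M" using tM(2) by metis
qed

lemma ub_sqm:
  assumes "IM (Tv (2 * k) - {[]}) sqadj (Lc (tau k) (Tv (2 * k) - {[]}) t) (Rc (tau k) (Tv (2 * k) - {[]}) t) M"
  shows "card M \<le> 2 * k"
proof -
  let ?V = "Tv (2 * k)" and ?V' = "Tv (2 * k) - {[]}"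
  have P: "IM ?V sqadj (Lc (tau k) ?V t) (Rc (tau k) ?V t) ((`) id ` M) \<and> card ((`) id ` M) = card M"
  proof (rule IM_push[OF symr_sqadj LR_basic symr_sqadj LR_basic _ _ _ _ assms])
    show "inj_on id ?V'" by simp
    show "\<And>x y. x \<in> ?V' \<Longrightarrow> y \<in> ?V' \<Longrightarrow> sqadj x y = sqadj (id x) (id y)" by simp
    show "id ` Lc (tau k) ?V' t \<subseteq> Lc (tau k) ?V t" unfolding Lc_def by auto
    show "id ` Rc (tau k) ?V' t \<subseteq> Rc (tau k) ?V t" unfolding Rc_def by auto
  qed
  then show ?thesis using ub_sq unfolding ubP_def by metis
qed

lemma lmw_exact:
  assumes fin: "finite V" "symr A" "inj_on \<tau> V"
    and ub: "\<And>t M. IM V A (Lc \<tau> V t) (Rc \<tau> V t) M \<Longrightarrow> card M \<le> w"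
    and lb: "lbP V A w"
  shows "lmw (mkG V A) = w"
proof (rule antisym)
  show "lmw (mkG V A) \<le> w" by (rule lmw_upper[OF fin(1,3) ub])
  show "w \<le> lmw (mkG V A)" by (rule lmw_lower[OF fin(1,2)]) (use lb in \<open>auto simp: lbP_def\<close>)
qed

theorem mainTheorem4:
  fixes k :: nat
  shows "lmw (Htree k) = k \<and> lmw (graph_square (Htree k)) = 2 * k
         \<and> lmw (delete_vertex (graph_square (Htree k)) Hroot) = 2 * k"
proof (intro conjI)
  show "lmw (Htree k) = k" unfolding Htree_mkG
    by (rule lmw_exact[OF finite_Tv symr_tadj tau_inj _ lb_tree]) (use ub_tree in \<open>auto simp: ubP_def\<close>)
  show "lmw (graph_square (Htree k)) = 2 * k" unfolding Htree_mkG square_mkG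
    by (rule lmw_exact[OF finite_Tv symr_sqadj tau_inj _ lb_sq]) (use ub_sq in \<open>auto simp: ubP_def\<close>)
  have inj': "inj_on (tau k) (Tv (2 * k) - {[]})" using tau_inj by (rule inj_on_subset) blast
  show "lmw (delete_vertex (graph_square (Htree k)) Hroot) = 2 * k"
    unfolding Htree_mkG square_mkG delete_mkG Hroot_def
    by (rule lmw_exact[OF _ symr_sqadj inj' ub_sqm lb_sqm]) (use finite_Tv in simp)
qed

end
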